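(* Let $m\ge3$. Then $\dim T=4\binom{m+4}{4}$.
   Context: $S=\{1,\dots,2m+1\}$, $X=\binom{S}{m}\cup\binom{S}{m+1}$; the doubled Odd graph $2.O_{m+1}$ has vertex set $X$, two vertices adjacent iff one is a proper subset of the other, with distance $\partial$. $x_0=\{1,\dots,m\}$. $T=T(x_0)$ is the subalgebra of complex $X\times X$ matrices generated by the adjacency matrix $A_1$ and the dual idempotents $E^*_i$ ($0\le i\le 2m+1$), where $E^*_i$ is diagonal with $(y,y)$-entry $1$ iff $\partial(x_0,y)=i$. *)

theory Defs
  imports Complex_Main "HOL-Library.Function_Algebras"
begin

text \<open>Complex X-by-X matrices are represented as functions
  nat set => nat set => complex; all matrices considered here vanish outside X x X.\<close>

type_synonym mx = "nat set \<Rightarrow> nat set \<Rightarrow> complex"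

definition Xv :: "nat \<Rightarrow> nat set set" where
  "Xv m = {y. y \<subseteq> {1..2*m+1} \<and> (card y = m \<or> card y = m + 1)}"

definition adj :: "nat \<Rightarrow> nat set \<Rightarrow> nat set \<Rightarrow> bool" where
  "adj m x y \<longleftrightarrow> x \<in> Xv m \<and> y \<in> Xv m \<and> (x \<subset> y \<or> y \<subset> x)"

inductive walk :: "nat \<Rightarrow> nat \<Rightarrow> nat set \<Rightarrow> nat set \<Rightarrow> bool" for m where
  walk_nil: "x \<in> Xv m \<Longrightarrow> walk m 0 x x"
| walk_step: "adj m x z \<Longrightarrow> walk m k z y \<Longrightarrow> walk m (Suc k) x y"

definition gdist :: "nat \<Rightarrow> nat set \<Rightarrow> nat set \<Rightarrow> nat" where
  "gdist m x y = (LEAST k. walk m k x y)"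

definition x0 :: "nat \<Rightarrow> nat set" where
  "x0 m = {1..m}"

definition A1 :: "nat \<Rightarrow> mx" where
  "A1 m = (\<lambda>x y. if adj m x y then 1 else 0)"

definition Estar :: "nat \<Rightarrow> nat \<Rightarrow> mx" where
  "Estar m i = (\<lambda>x y. if x \<in> Xv m \<and> x = y \<and> gdist m (x0 m) x = i then 1 else 0)"

definition Imx :: "nat \<Rightarrow> mx" where
  "Imx m = (\<lambda>x y. if x \<in> Xv m \<and> x = y then 1 else 0)"

definition mmult :: "nat \<Rightarrow> mx \<Rightarrow> mx \<Rightarrow> mx" where
  "mmult m M N = (\<lambda>x z. \<Sum>y\<in>Xv m. M x y * N y z)"

definition mscale :: "complex \<Rightarrow> mx \<Rightarrow> mx" where
  "mscale c M = (\<lambda>x y. c * M x y)"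

inductive_set Talg :: "nat \<Rightarrow> mx set" for m where
  T_A: "A1 m \<in> Talg m"
| T_E: "i \<le> 2*m+1 \<Longrightarrow> Estar m i \<in> Talg m"
| T_I: "Imx m \<in> Talg m"
| T_add: "M \<in> Talg m \<Longrightarrow> N \<in> Talg m \<Longrightarrow> M + N \<in> Talg m"
| T_scale: "M \<in> Talg m \<Longrightarrow> mscale c M \<in> Talg m"
| T_mult: "M \<in> Talg m \<Longrightarrow> N \<in> Talg m \<Longrightarrow> mmult m M N \<in> Talg m"

end

theory Submission
  imports Defs
begin

definition Aset :: "nat \<Rightarrow> nat set" where "Aset m = {1..m}"
definition Bset :: "nat \<Rightarrow> nat set" where "Bset m = {m+1..2*m+1}"
definition Sset :: "nat \<Rightarrow> nat set" where "Sset m = {1..2*m+1}"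

lemma S_AB: "Sset m = Aset m \<union> Bset m" by (auto simp: Sset_def Aset_def Bset_def)
lemma AB_disj: "Aset m \<inter> Bset m = {}" by (auto simp: Aset_def Bset_def)
lemma card_A[simp]: "card (Aset m) = m" by (simp add: Aset_def)
lemma card_B[simp]: "card (Bset m) = m+1" by (simp add: Bset_def)
lemma fin_A[simp]: "finite (Aset m)" by (simp add: Aset_def)
lemma fin_B[simp]: "finite (Bset m)" by (simp add: Bset_def)
lemma fin_S[simp]: "finite (Sset m)" by (simp add: Sset_def)

lemma Xv_iff: "y \<in> Xv m \<longleftrightarrow> y \<subseteq> Sset m \<and> (card y = m \<or> card y = m+1)"
  by (simp add: Xv_def Sset_def)

lemma Xv_fin: "y \<in> Xv m \<Longrightarrow> finite y"
  by (meson Xv_iff fin_S finite_subset)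

lemma finite_Xv[simp]: "finite (Xv m)"
proof -
  have "Xv m \<subseteq> Pow (Sset m)" by (auto simp: Xv_iff)
  then show ?thesis by (rule finite_subset) simp
qed

lemma card_split: "y \<subseteq> Sset m \<Longrightarrow> card y = card (y \<inter> Aset m) + card (y \<inter> Bset m)"
proof -
  assume "y \<subseteq> Sset m"
  then have "y = (y \<inter> Aset m) \<union> (y \<inter> Bset m)" by (auto simp: S_AB)
  moreover have "finite y" using \<open>y \<subseteq> Sset m\<close> fin_S finite_subset by blast
  ultimately show ?thesis using AB_disj
    by (metis card_Un_disjoint finite_Int inf_commute inf_left_commute inf_bot_right)
qed

definition phi :: "nat \<Rightarrow> nat set \<Rightarrow> nat" where
  "phi m y = (if card y = m then 2 * card (y \<inter> Bset m) else 2 * card (y \<inter> Bset m) - 1)"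

lemma adj_cases:
  assumes "adj m x z"
  shows "(\<exists>e. e \<in> Sset m \<and> e \<notin> x \<and> z = insert e x \<and> card x = m) \<or>
         (\<exists>e. e \<in> x \<and> z = x - {e} \<and> card x = m+1)"
proof -
  have x: "x \<in> Xv m" and z: "z \<in> Xv m" and s: "x \<subset> z \<or> z \<subset> x" using assms by (auto simp: adj_def)
  have fx: "finite x" "finite z" using x z Xv_fin by auto
  show ?thesis
  proof (cases "x \<subset> z")
    case True
    then have "card x < card z" using fx psubset_card_mono by blast
    then have cx: "card x = m" "card z = m+1" using x z by (auto simp: Xv_iff)
    then have "card (z - x) = 1" using True fx by (simp add: card_Diff_subset less_imp_le)
    then obtain e where e: "z - x = {e}" by (auto simp: card_Suc_eq)
    then have "z = insert e x" using True by auto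
    moreover have "e \<in> Sset m" using e z by (auto simp: Xv_iff)
    ultimately show ?thesis using e cx by auto
  next
    case False
    then have T: "z \<subset> x" using s by auto
    then have "card z < card x" using fx psubset_card_mono by blast
    then have cx: "card z = m" "card x = m+1" using x z by (auto simp: Xv_iff)
    then have "card (x - z) = 1" using T fx by (simp add: card_Diff_subset less_imp_le)
    then obtain e where e: "x - z = {e}" by (auto simp: card_Suc_eq)
    then have "z = x - {e}" using T by auto
    then show ?thesis using e cx by auto
  qed
qed

lemma Xv_sub: "y \<in> Xv m \<Longrightarrow> y \<subseteq> Sset m" by (simp add: Xv_iff)

lemma cardA_le: "y \<in> Xv m \<Longrightarrow> card (y \<inter> Aset m) \<le> m"
  by (metis card_A card_mono fin_A inf_le2)
lemma cardB_le: "y \<in> Xv m \<Longrightarrow> card (y \<inter> Bset m) \<le> m + 1"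
  by (metis card_B card_mono fin_B inf_le2)

lemma AB_cases: "e \<in> Sset m \<Longrightarrow> (e \<in> Aset m \<and> e \<notin> Bset m) \<or> (e \<in> Bset m \<and> e \<notin> Aset m)"
  using S_AB AB_disj by blast

lemma x0_Xv: "x0 m \<in> Xv m" by (auto simp: x0_def Xv_iff Sset_def)
lemma x0_A: "x0 m = Aset m" by (simp add: x0_def Aset_def)

lemma phi_x0: "phi m (x0 m) = 0"
  by (simp add: phi_def x0_A AB_disj)

definition upstep :: "nat \<Rightarrow> nat set \<Rightarrow> nat set \<Rightarrow> bool" where
  "upstep m x z \<longleftrightarrow> phi m z = phi m x + 1 \<and> z \<inter> Aset m \<subseteq> x \<inter> Aset m \<and> x \<inter> Bset m \<subseteq> z \<inter> Bset m"

lemma adj_sym: "adj m x z \<Longrightarrow> adj m z x" by (auto simp: adj_def)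

lemma adj_up_aux:
  assumes "adj m x z" shows "upstep m x z \<or> upstep m z x"
proof -
  have x: "x \<in> Xv m" and z: "z \<in> Xv m" using assms by (auto simp: adj_def)
  have fx: "finite x" using x Xv_fin by auto
  have cs: "card x = card (x \<inter> Aset m) + card (x \<inter> Bset m)" using card_split Xv_sub x by blast
  have cA: "card (x \<inter> Aset m) \<le> m" using cardA_le x by blast
  from adj_cases[OF assms] show ?thesis
  proof
    assume "\<exists>e. e \<in> Sset m \<and> e \<notin> x \<and> z = insert e x \<and> card x = m"
    then obtain e where e: "e \<in> Sset m" "e \<notin> x" "z = insert e x" "card x = m" by blast
    have cz: "card z = m + 1" using e fx by simp
    from AB_cases[OF e(1)] show ?thesis
    proof
      assume eA: "e \<in> Aset m \<and> e \<notin> Bset m"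
      have zB: "z \<inter> Bset m = x \<inter> Bset m" using e eA by auto
      have "card (x \<inter> Aset m) < m"
      proof -
        have "insert e (x \<inter> Aset m) \<subseteq> Aset m" using eA by auto
        then have "card (insert e (x \<inter> Aset m)) \<le> m" by (metis card_A card_mono fin_A)
        then show ?thesis using e(2) fx by simp
      qed
      then have "card (x \<inter> Bset m) \<ge> 1" using cs e(4) by linarith
      then have "upstep m z x" unfolding upstep_def phi_def using zB cz e by auto
      then show ?thesis by blast
    next
      assume eB: "e \<in> Bset m \<and> e \<notin> Aset m"
      have zA: "z \<inter> Aset m = x \<inter> Aset m" using e eB by auto
      have "z \<inter> Bset m = insert e (x \<inter> Bset m)" using e eB by auto
      then have "card (z \<inter> Bset m) = card (x \<inter> Bset m) + 1" using e fx by simp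
      then have "upstep m x z" unfolding upstep_def phi_def using zA cz e by auto
      then show ?thesis by blast
    qed
  next
    assume "\<exists>e. e \<in> x \<and> z = x - {e} \<and> card x = m+1"
    then obtain e where e: "e \<in> x" "z = x - {e}" "card x = m+1" by blast
    have cz: "card z = m" using e fx by simp
    have eS: "e \<in> Sset m" using e x Xv_sub by blast
    have cB: "card (x \<inter> Bset m) \<ge> 1" using cs cA e(3) by linarith
    from AB_cases[OF eS] show ?thesis
    proof
      assume eA: "e \<in> Aset m \<and> e \<notin> Bset m"
      have zB: "z \<inter> Bset m = x \<inter> Bset m" using e eA by auto
      have "upstep m x z" unfolding upstep_def phi_def using zB cz e cB by auto
      then show ?thesis by blast
    next
      assume eB: "e \<in> Bset m \<and> e \<notin> Aset m"
      have zA: "z \<inter> Aset m = x \<inter> Aset m" using e eB by auto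
      have "x \<inter> Bset m = insert e (z \<inter> Bset m)" using e eB by auto
      then have "card (x \<inter> Bset m) = card (z \<inter> Bset m) + 1" using e fx by simp
      then have "upstep m z x" unfolding upstep_def phi_def using zA cz e by auto
      then show ?thesis by blast
    qed
  qed
qed

lemma adj_phi: "adj m x z \<Longrightarrow> phi m z \<le> phi m x + 1"
  using adj_up_aux[of m x z] by (auto simp: upstep_def)

lemma walk_Xv: "walk m k x y \<Longrightarrow> x \<in> Xv m \<and> y \<in> Xv m"
  by (induction rule: walk.induct) (auto simp: adj_def)

lemma walk_phi: "walk m k x y \<Longrightarrow> phi m y \<le> phi m x + k"
proof (induction rule: walk.induct)
  case (walk_nil x) then show ?case by simp
next
  case (walk_step x z k y)
  then show ?case using adj_phi[OF walk_step(1)] by simp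
qed

lemma walk_snoc: "walk m k x y \<Longrightarrow> adj m y w \<Longrightarrow> walk m (Suc k) x w"
proof (induction rule: walk.induct)
  case (walk_nil x)
  then show ?case by (meson adj_def walk.intros)
next
  case (walk_step x z k y)
  then show ?case by (meson walk.walk_step)
qed

lemma walk_to_m: "y \<in> Xv m \<Longrightarrow> card y = m \<Longrightarrow> card (y \<inter> Bset m) = n \<Longrightarrow> walk m (2*n) (x0 m) y"
proof (induction n arbitrary: y)
  case 0
  have fy: "finite y" using 0 Xv_fin by auto
  have "y \<subseteq> Aset m" using 0 Xv_sub[OF 0(1)] S_AB fy by auto
  then have "y = Aset m" using 0 by (simp add: card_subset_eq)
  then show ?case using x0_A x0_Xv walk_nil by auto
next
  case (Suc n)
  have fy: "finite y" using Suc Xv_fin by auto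
  have cs: "card y = card (y \<inter> Aset m) + card (y \<inter> Bset m)" using card_split Xv_sub Suc by blast
  obtain b where b: "b \<in> y \<inter> Bset m" using Suc(4) by (metis card.empty ex_in_conv nat.distinct(1))
  have "card (y \<inter> Aset m) < m" using cs Suc by simp
  then have "\<not> Aset m \<subseteq> y \<inter> Aset m" by (metis card_A card_mono fin_A finite_Int leD)
  then obtain a where a: "a \<in> Aset m" "a \<notin> y" by auto
  have bA: "b \<notin> Aset m" using b AB_disj by auto
  define y' where "y' = insert a (y - {b})"
  have ab: "a \<noteq> b" using a b by auto
  have m1: "card y > 0" using fy b card_gt_0_iff by blast
  have "card (y - {b}) = m - 1" using fy b Suc(3) by simp
  then have cy': "card y' = m" unfolding y'_def using fy a m1 Suc(3) by simp
  have y'S: "y' \<subseteq> Sset m" unfolding y'_def using a Xv_sub[OF Suc(2)] S_AB by blast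
  have y'X: "y' \<in> Xv m" using cy' y'S by (simp add: Xv_iff)
  have "y' \<inter> Bset m = (y \<inter> Bset m) - {b}" unfolding y'_def using a AB_disj by blast
  then have "card (y' \<inter> Bset m) = n" using Suc(4) b fy by simp
  then have w1: "walk m (2*n) (x0 m) y'" using Suc.IH y'X cy' by blast
  define w where "w = insert b y'"
  have bny': "b \<notin> y'" unfolding y'_def using ab by blast
  have fy': "finite y'" using y'X Xv_fin by blast
  have cw: "card w = m+1" unfolding w_def using bny' cy' fy' by simp
  have wS: "w \<subseteq> Sset m" unfolding w_def using y'S b Xv_sub[OF Suc(2)] by blast
  have wX: "w \<in> Xv m" using cw wS by (simp add: Xv_iff)
  have a1: "adj m y' w" unfolding adj_def using y'X wX bny' w_def by blast
  have yw: "y = w - {a}" unfolding w_def y'_def using a b ab by blast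
  have "y \<subset> w" using yw a(2) w_def y'_def by blast
  then have a2: "adj m w y" unfolding adj_def using wX Suc(2) by blast
  have "walk m (Suc (2*n)) (x0 m) w" using walk_snoc[OF w1 a1] .
  then have "walk m (Suc (Suc (2*n))) (x0 m) y" using walk_snoc[OF _ a2] by blast
  then show ?case by simp
qed

lemma walk_to: "y \<in> Xv m \<Longrightarrow> walk m (phi m y) (x0 m) y"
proof -
  assume yX: "y \<in> Xv m"
  show ?thesis
  proof (cases "card y = m")
    case True
    then show ?thesis using walk_to_m[OF yX True refl] by (simp add: phi_def)
  next
    case False
    then have cy: "card y = m+1" using yX by (simp add: Xv_iff)
    have fy: "finite y" using yX Xv_fin by auto
    have cs: "card y = card (y \<inter> Aset m) + card (y \<inter> Bset m)" using card_split Xv_sub yX by blast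
    have "card (y \<inter> Bset m) \<ge> 1" using cs cy cardA_le[OF yX] by linarith
    then obtain b where b: "b \<in> y \<inter> Bset m" by (metis card.empty ex_in_conv not_one_le_zero)
    define z where "z = y - {b}"
    have cz: "card z = m" unfolding z_def using cy b fy by simp
    have zX: "z \<in> Xv m" using cz Xv_sub[OF yX] by (auto simp: Xv_iff z_def)
    have "z \<inter> Bset m = (y \<inter> Bset m) - {b}" unfolding z_def by auto
    then have czb: "card (z \<inter> Bset m) = card (y \<inter> Bset m) - 1" using b fy by simp
    have w: "walk m (2 * (card (y \<inter> Bset m) - 1)) (x0 m) z" using walk_to_m[OF zX cz czb] .
    have "adj m z y" unfolding adj_def using zX yX b z_def by auto
    have e: "Suc (2 * (card (y \<inter> Bset m) - 1)) = phi m y"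
      using \<open>card (y \<inter> Bset m) \<ge> 1\<close> False by (simp add: phi_def)
    from walk_snoc[OF w \<open>adj m z y\<close>] show ?thesis unfolding e .
  qed
qed

lemma gdist_phi: "y \<in> Xv m \<Longrightarrow> gdist m (x0 m) y = phi m y"
  unfolding gdist_def
proof (rule Least_equality)
  assume "y \<in> Xv m"
  then show "walk m (phi m y) (x0 m) y" by (rule walk_to)
next
  fix k assume "walk m k (x0 m) y"
  then show "phi m y \<le> k" using walk_phi phi_x0 by fastforce
qed

lemma Estar_phi: "Estar m i = (\<lambda>x y. if x \<in> Xv m \<and> x = y \<and> phi m x = i then 1 else 0)"
  by (auto simp: Estar_def gdist_phi fun_eq_iff)

lemma Talg_supp: "M \<in> Talg m \<Longrightarrow> (x \<notin> Xv m \<or> y \<notin> Xv m) \<Longrightarrow> M x y = 0"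
proof (induction arbitrary: x y rule: Talg.induct)
  case T_A then show ?case by (auto simp: A1_def adj_def)
next
  case (T_E i) then show ?case by (auto simp: Estar_def)
next
  case T_I then show ?case by (auto simp: Imx_def)
next
  case (T_add M N) then show ?case by simp
next
  case (T_scale M c) then show ?case by (simp add: mscale_def)
next
  case (T_mult M N) then show ?case by (auto simp: mmult_def)
qed

lemma zero_Talg: "(0::mx) \<in> Talg m"
proof -
  have "mscale 0 (Imx m) = 0" by (simp add: mscale_def fun_eq_iff)
  moreover have "mscale 0 (Imx m) \<in> Talg m" by (rule Talg.T_scale[OF Talg.T_I])
  ultimately show ?thesis by simp
qed

lemma phi_le: "y \<in> Xv m \<Longrightarrow> phi m y \<le> 2*m+1"
proof -
  assume y: "y \<in> Xv m"
  have cs: "card y = card (y \<inter> Aset m) + card (y \<inter> Bset m)" using card_split Xv_sub y by blast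
  show ?thesis using cardB_le[OF y] cs unfolding phi_def by auto
qed

lemma Estar_Talg: "Estar m i \<in> Talg m"
proof (cases "i \<le> 2*m+1")
  case True then show ?thesis by (rule Talg.T_E)
next
  case False
  then have "Estar m i = 0" using phi_le by (force simp: Estar_phi fun_eq_iff)
  then show ?thesis using zero_Talg by simp
qed

lemma Talg_diff: "M \<in> Talg m \<Longrightarrow> N \<in> Talg m \<Longrightarrow> M - N \<in> Talg m"
proof -
  assume "M \<in> Talg m" "N \<in> Talg m"
  moreover have eq: "M - N = M + mscale (-1) N" by (simp add: mscale_def fun_eq_iff)
  ultimately show ?thesis by (metis Talg.T_add Talg.T_scale)
qed

lemma Talg_sum: "finite I \<Longrightarrow> (\<And>i. i \<in> I \<Longrightarrow> f i \<in> Talg m) \<Longrightarrow> sum f I \<in> Talg m"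
  by (induction rule: finite_induct) (auto intro: Talg.T_add zero_Talg)

definition mtransp :: "mx \<Rightarrow> mx" where "mtransp M = (\<lambda>x y. M y x)"

lemma Talg_transp: "M \<in> Talg m \<Longrightarrow> mtransp M \<in> Talg m"
proof (induction rule: Talg.induct)
  case T_A
  have "mtransp (A1 m) = A1 m" by (auto simp: mtransp_def A1_def adj_def fun_eq_iff)
  then show ?case using Talg.T_A by simp
next
  case (T_E i)
  have "mtransp (Estar m i) = Estar m i" by (auto simp: mtransp_def Estar_def fun_eq_iff)
  then show ?case using Talg.T_E[OF T_E] by simp
next
  case T_I
  have "mtransp (Imx m) = Imx m" by (auto simp: mtransp_def Imx_def fun_eq_iff)
  then show ?case using Talg.T_I by simp
next
  case (T_add M N)
  have "mtransp (M + N) = mtransp M + mtransp N" by (simp add: mtransp_def fun_eq_iff)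
  then show ?case by (simp only:) (rule Talg.T_add[OF T_add.IH])
next
  case (T_scale M c)
  have "mtransp (mscale c M) = mscale c (mtransp M)" by (simp add: mtransp_def mscale_def fun_eq_iff)
  then show ?case by (simp only:) (rule Talg.T_scale[OF T_scale.IH])
next
  case (T_mult M N)
  have "mtransp (mmult m M N) = mmult m (mtransp N) (mtransp M)"
    by (simp add: mtransp_def mmult_def fun_eq_iff mult.commute)
  then show ?case by (simp only:) (rule Talg.T_mult[OF T_mult.IH(2) T_mult.IH(1)])
qed

definition nn :: "mx \<Rightarrow> bool" where "nn M \<longleftrightarrow> (\<forall>x y. \<exists>n::nat. M x y = of_nat n)"

lemma nn_mmult:
  assumes "nn M" "nn N"
  shows "nn (mmult m M N)"
    and "mmult m M N x z \<noteq> 0 \<longleftrightarrow> (\<exists>y\<in>Xv m. M x y \<noteq> 0 \<and> N y z \<noteq> 0)"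
proof -
  obtain f where f: "\<And>x y. M x y = of_nat (f x y)" using assms(1) unfolding nn_def by metis
  obtain g where g: "\<And>x y. N x y = of_nat (g x y)" using assms(2) unfolding nn_def by metis
  have e: "\<And>x z. mmult m M N x z = of_nat (\<Sum>y\<in>Xv m. f x y * g y z)"
    by (simp add: mmult_def f g of_nat_sum)
  show "nn (mmult m M N)" unfolding nn_def using e by blast
  show "mmult m M N x z \<noteq> 0 \<longleftrightarrow> (\<exists>y\<in>Xv m. M x y \<noteq> 0 \<and> N y z \<noteq> 0)"
    unfolding e f g of_nat_eq_0_iff using sum_eq_0_iff[OF finite_Xv] by simp
qed

lemma nn_A1: "nn (A1 m)" unfolding nn_def A1_def by (metis of_nat_0 of_nat_1)
lemma nn_Estar: "nn (Estar m i)" unfolding nn_def Estar_def by (metis of_nat_0 of_nat_1)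
lemma nn_Imx: "nn (Imx m)" unfolding nn_def Imx_def by (metis of_nat_0 of_nat_1)

lemma A1_nz: "A1 m x y \<noteq> 0 \<longleftrightarrow> adj m x y" by (simp add: A1_def)
lemma Estar_nz: "Estar m i x y \<noteq> 0 \<longleftrightarrow> x \<in> Xv m \<and> x = y \<and> phi m x = i" by (auto simp: Estar_phi)
lemma Imx_nz: "Imx m x y \<noteq> 0 \<longleftrightarrow> x \<in> Xv m \<and> x = y" by (auto simp: Imx_def)

definition G :: "nat \<Rightarrow> (nat \<Rightarrow> nat) set" where
  "G m = {\<sigma>. bij_betw \<sigma> (Sset m) (Sset m) \<and> \<sigma> ` Aset m = Aset m}"

lemma A_sub_S: "Aset m \<subseteq> Sset m" and B_sub_S: "Bset m \<subseteq> Sset m"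
  by (auto simp: S_AB)

lemma G_inj: "\<sigma> \<in> G m \<Longrightarrow> inj_on \<sigma> (Sset m)" by (simp add: G_def bij_betw_def)
lemma G_S: "\<sigma> \<in> G m \<Longrightarrow> \<sigma> ` Sset m = Sset m" by (simp add: G_def bij_betw_def)
lemma G_A: "\<sigma> \<in> G m \<Longrightarrow> \<sigma> ` Aset m = Aset m" by (simp add: G_def)
lemma G_B: "\<sigma> \<in> G m \<Longrightarrow> \<sigma> ` Bset m = Bset m"
proof -
  assume g: "\<sigma> \<in> G m"
  have "Bset m = Sset m - Aset m" using S_AB AB_disj by blast
  then show ?thesis using inj_on_image_set_diff[OF G_inj[OF g], of "Sset m" "Aset m"] G_S[OF g] G_A[OF g] A_sub_S
    by auto
qed

lemma G_card: "\<sigma> \<in> G m \<Longrightarrow> y \<subseteq> Sset m \<Longrightarrow> card (\<sigma> ` y) = card y"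
proof -
  assume "\<sigma> \<in> G m" "y \<subseteq> Sset m"
  then have "inj_on \<sigma> y" using G_inj inj_on_subset by blast
  then show ?thesis by (rule card_image)
qed

lemma G_Int: "\<sigma> \<in> G m \<Longrightarrow> y \<subseteq> Sset m \<Longrightarrow> z \<subseteq> Sset m \<Longrightarrow> \<sigma> ` y \<inter> \<sigma> ` z = \<sigma> ` (y \<inter> z)"
  using inj_on_image_Int[OF G_inj] by blast

lemma G_sub: "\<sigma> \<in> G m \<Longrightarrow> y \<subseteq> Sset m \<Longrightarrow> z \<subseteq> Sset m \<Longrightarrow> \<sigma> ` y \<subseteq> \<sigma> ` z \<longleftrightarrow> y \<subseteq> z"
proof
  assume g: "\<sigma> \<in> G m" and y: "y \<subseteq> Sset m" and z: "z \<subseteq> Sset m" and s: "\<sigma> ` y \<subseteq> \<sigma> ` z"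
  have "\<sigma> ` (y \<inter> z) = \<sigma> ` y" using G_Int[OF g y z] s by (simp add: Int_absorb2)
  moreover have "y \<inter> z \<subseteq> Sset m" using y by blast
  ultimately have "y \<inter> z = y" using inj_on_image_eq_iff[OF G_inj[OF g]] y by metis
  then show "y \<subseteq> z" by (simp add: Int_absorb2 le_iff_inf)
next
  assume "y \<subseteq> z" then show "\<sigma> ` y \<subseteq> \<sigma> ` z" by (rule image_mono)
qed

lemma G_eq: "\<sigma> \<in> G m \<Longrightarrow> y \<subseteq> Sset m \<Longrightarrow> z \<subseteq> Sset m \<Longrightarrow> \<sigma> ` y = \<sigma> ` z \<longleftrightarrow> y = z"
  using inj_on_image_eq_iff[OF G_inj] by metis

lemma G_Xv: "\<sigma> \<in> G m \<Longrightarrow> y \<in> Xv m \<Longrightarrow> \<sigma> ` y \<in> Xv m"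
proof -
  assume g: "\<sigma> \<in> G m" and y: "y \<in> Xv m"
  have "\<sigma> ` y \<subseteq> \<sigma> ` Sset m" using Xv_sub[OF y] by (rule image_mono)
  then have "\<sigma> ` y \<subseteq> Sset m" using G_S[OF g] by simp
  then show ?thesis using G_card[OF g Xv_sub[OF y]] y by (simp add: Xv_iff)
qed

lemma G_cardA: "\<sigma> \<in> G m \<Longrightarrow> y \<subseteq> Sset m \<Longrightarrow> card (\<sigma> ` y \<inter> Aset m) = card (y \<inter> Aset m)"
proof -
  assume g: "\<sigma> \<in> G m" and y: "y \<subseteq> Sset m"
  have "\<sigma> ` y \<inter> \<sigma> ` Aset m = \<sigma> ` (y \<inter> Aset m)" by (rule G_Int[OF g y A_sub_S])
  then have e: "\<sigma> ` y \<inter> Aset m = \<sigma> ` (y \<inter> Aset m)" using G_A[OF g] by simp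
  have "y \<inter> Aset m \<subseteq> Sset m" using y by (rule le_infI1)
  then show ?thesis unfolding e by (rule G_card[OF g])
qed
lemma G_cardB: "\<sigma> \<in> G m \<Longrightarrow> y \<subseteq> Sset m \<Longrightarrow> card (\<sigma> ` y \<inter> Bset m) = card (y \<inter> Bset m)"
proof -
  assume g: "\<sigma> \<in> G m" and y: "y \<subseteq> Sset m"
  have "\<sigma> ` y \<inter> \<sigma> ` Bset m = \<sigma> ` (y \<inter> Bset m)" by (rule G_Int[OF g y B_sub_S])
  then have e: "\<sigma> ` y \<inter> Bset m = \<sigma> ` (y \<inter> Bset m)" using G_B[OF g] by simp
  have "y \<inter> Bset m \<subseteq> Sset m" using y by (rule le_infI1)
  then show ?thesis unfolding e by (rule G_card[OF g])
qed

lemma G_phi: "\<sigma> \<in> G m \<Longrightarrow> y \<in> Xv m \<Longrightarrow> phi m (\<sigma> ` y) = phi m y"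
proof -
  assume g: "\<sigma> \<in> G m" and y: "y \<in> Xv m"
  show ?thesis unfolding phi_def using G_cardB[OF g Xv_sub[OF y]] G_card[OF g Xv_sub[OF y]] by simp
qed

lemma G_bijX: "\<sigma> \<in> G m \<Longrightarrow> bij_betw (\<lambda>y. \<sigma> ` y) (Xv m) (Xv m)"
proof -
  assume g: "\<sigma> \<in> G m"
  have inj: "inj_on (\<lambda>y. \<sigma> ` y) (Xv m)"
  proof (rule inj_onI)
    fix y z assume "y \<in> Xv m" "z \<in> Xv m" "\<sigma> ` y = \<sigma> ` z"
    then show "y = z" using G_eq[OF g Xv_sub Xv_sub] by metis
  qed
  have "(\<lambda>y. \<sigma> ` y) ` Xv m = Xv m"
  proof
    show "(\<lambda>y. \<sigma> ` y) ` Xv m \<subseteq> Xv m" using G_Xv[OF g] by (rule image_subsetI)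
  next
    show "Xv m \<subseteq> (\<lambda>y. \<sigma> ` y) ` Xv m"
    proof
      fix y assume y: "y \<in> Xv m"
      define \<tau> where "\<tau> = inv_into (Sset m) \<sigma>"
      have bs: "bij_betw \<sigma> (Sset m) (Sset m)" using g by (simp add: G_def)
      have bt: "bij_betw \<tau> (Sset m) (Sset m)" unfolding \<tau>_def by (rule bij_betw_inv_into[OF bs])
      have it: "inj_on \<tau> (Sset m)" and st: "\<tau> ` Sset m = Sset m" using bt by (simp_all add: bij_betw_def)
      have "\<tau> ` y \<subseteq> \<tau> ` Sset m" using Xv_sub[OF y] by (rule image_mono)
      then have ty: "\<tau> ` y \<subseteq> Sset m" using st by simp
      have "inj_on \<tau> y" using it Xv_sub[OF y] by (rule inj_on_subset)
      then have "card (\<tau> ` y) = card y" by (rule card_image)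
      then have tyX: "\<tau> ` y \<in> Xv m" using ty y by (simp add: Xv_iff)
      have "\<sigma> ` (\<tau> ` y) = y" unfolding \<tau>_def by (rule image_inv_into_cancel[OF G_S[OF g] Xv_sub[OF y]])
      then show "y \<in> (\<lambda>y. \<sigma> ` y) ` Xv m" using tyX by (rule image_eqI[where x="\<tau> ` y", OF sym])
    qed
  qed
  then show ?thesis using inj by (simp add: bij_betw_def)
qed

definition invar :: "nat \<Rightarrow> mx \<Rightarrow> bool" where
  "invar m M \<longleftrightarrow> (\<forall>\<sigma>\<in>G m. \<forall>y\<in>Xv m. \<forall>z\<in>Xv m. M (\<sigma> ` y) (\<sigma> ` z) = M y z)"

lemma G_adj: "\<sigma> \<in> G m \<Longrightarrow> y \<in> Xv m \<Longrightarrow> z \<in> Xv m \<Longrightarrow> adj m (\<sigma> ` y) (\<sigma> ` z) = adj m y z"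
proof -
  assume g: "\<sigma> \<in> G m" and y: "y \<in> Xv m" and z: "z \<in> Xv m"
  have 1: "\<sigma> ` y \<subseteq> \<sigma> ` z \<longleftrightarrow> y \<subseteq> z" "\<sigma> ` z \<subseteq> \<sigma> ` y \<longleftrightarrow> z \<subseteq> y"
    using G_sub[OF g Xv_sub[OF y] Xv_sub[OF z]] G_sub[OF g Xv_sub[OF z] Xv_sub[OF y]] by simp_all
  have 2: "\<sigma> ` y = \<sigma> ` z \<longleftrightarrow> y = z" using G_eq[OF g Xv_sub[OF y] Xv_sub[OF z]] .
  have 3: "\<sigma> ` z = \<sigma> ` y \<longleftrightarrow> z = y" using 2 by blast
  have p1: "\<sigma> ` y \<subset> \<sigma> ` z \<longleftrightarrow> y \<subset> z" unfolding psubset_eq 1 2 by (rule refl)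
  have p2: "\<sigma> ` z \<subset> \<sigma> ` y \<longleftrightarrow> z \<subset> y" unfolding psubset_eq 1 3 by (rule refl)
  show ?thesis unfolding adj_def p1 p2 using G_Xv[OF g] y z by simp
qed

lemma Talg_invar: "M \<in> Talg m \<Longrightarrow> invar m M"
proof (induction rule: Talg.induct)
  case T_A then show ?case by (simp add: invar_def A1_def G_adj)
next
  case (T_E i)
  show ?case unfolding invar_def
  proof (intro ballI)
    fix \<sigma> y z assume g: "\<sigma> \<in> G m" and y: "y \<in> Xv m" and z: "z \<in> Xv m"
    have 2: "\<sigma> ` y = \<sigma> ` z \<longleftrightarrow> y = z" using G_eq[OF g Xv_sub[OF y] Xv_sub[OF z]] .
    show "Estar m i (\<sigma> ` y) (\<sigma> ` z) = Estar m i y z"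
      unfolding Estar_phi using 2 G_Xv[OF g] G_phi[OF g] y z by simp
  qed
next
  case T_I
  show ?case unfolding invar_def
  proof (intro ballI)
    fix \<sigma> y z assume g: "\<sigma> \<in> G m" and y: "y \<in> Xv m" and z: "z \<in> Xv m"
    have 2: "\<sigma> ` y = \<sigma> ` z \<longleftrightarrow> y = z" using G_eq[OF g Xv_sub[OF y] Xv_sub[OF z]] .
    show "Imx m (\<sigma> ` y) (\<sigma> ` z) = Imx m y z"
      unfolding Imx_def using 2 G_Xv[OF g] y z by simp
  qed
next
  case (T_add M N) then show ?case by (simp add: invar_def)
next
  case (T_scale M c) then show ?case by (simp add: invar_def mscale_def)
next
  case (T_mult M N)
  show ?case unfolding invar_def
  proof (intro ballI)
    fix \<sigma> y z assume g: "\<sigma> \<in> G m" and y: "y \<in> Xv m" and z: "z \<in> Xv m"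
    have "mmult m M N (\<sigma> ` y) (\<sigma> ` z) = (\<Sum>w\<in>Xv m. M (\<sigma> ` y) (\<sigma> ` w) * N (\<sigma> ` w) (\<sigma> ` z))"
      unfolding mmult_def using sum.reindex_bij_betw[OF G_bijX[OF g], of "\<lambda>w. M (\<sigma> ` y) w * N w (\<sigma> ` z)"]
      by simp
    also have "\<dots> = (\<Sum>w\<in>Xv m. M y w * N w z)"
      using T_mult.IH g y z by (simp add: invar_def)
    finally show "mmult m M N (\<sigma> ` y) (\<sigma> ` z) = mmult m M N y z" by (simp add: mmult_def)
  qed
qed

lemma glue:
  assumes "bij_betw f P P'" "bij_betw g Q Q'" "P \<inter> Q = {}" "P' \<inter> Q' = {}"
  shows "bij_betw (\<lambda>x. if x \<in> P then f x else g x) (P \<union> Q) (P' \<union> Q')"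
proof -
  have 1: "bij_betw (\<lambda>x. if x \<in> P then f x else g x) P P'"
    using bij_betw_cong[of P "\<lambda>x. if x \<in> P then f x else g x" f P'] assms(1) by simp
  have 2: "bij_betw (\<lambda>x. if x \<in> P then f x else g x) Q Q'"
  proof -
    have "\<And>a. a \<in> Q \<Longrightarrow> (if a \<in> P then f a else g a) = g a" using assms(3) by auto
    then show ?thesis using bij_betw_cong[of Q "\<lambda>x. if x \<in> P then f x else g x" g Q'] assms(2) by simp
  qed
  show ?thesis by (rule bij_betw_combine[OF 1 2 assms(4)])
qed

lemma region_bij:
  assumes fin: "finite P" and sub: "u \<subseteq> P" "v \<subseteq> P" "u' \<subseteq> P" "v' \<subseteq> P"
    and c: "card u = card u'" "card v = card v'" "card (u \<inter> v) = card (u' \<inter> v')"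
  shows "\<exists>f. bij_betw f P P \<and> f ` u = u' \<and> f ` v = v'"
proof -
  have fs: "finite u" "finite v" "finite u'" "finite v'" using sub fin finite_subset by blast+
  define R1 where "R1 = u \<inter> v"
  define R2 where "R2 = u - v"
  define R3 where "R3 = v - u"
  define R4 where "R4 = P - (u \<union> v)"
  define S1 where "S1 = u' \<inter> v'"
  define S2 where "S2 = u' - v'"
  define S3 where "S3 = v' - u'"
  define S4 where "S4 = P - (u' \<union> v')"
  have c1: "card R1 = card S1" using c by (simp add: R1_def S1_def)
  have c2: "card R2 = card S2" unfolding R2_def S2_def
    using c fs by (simp add: card_Diff_subset_Int)
  have c3: "card R3 = card S3" unfolding R3_def S3_def
    using c fs by (simp add: card_Diff_subset_Int Int_commute)
  have cu: "card (u \<union> v) = card (u' \<union> v')"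
    using card_Un_Int[OF fs(1,2)] card_Un_Int[OF fs(3,4)] c by simp
  have c4: "card R4 = card S4" unfolding R4_def S4_def
    using cu fs sub fin by (simp add: card_Diff_subset)
  have fR: "finite R1" "finite R2" "finite R3" "finite R4" "finite S1" "finite S2" "finite S3" "finite S4"
    unfolding R1_def R2_def R3_def R4_def S1_def S2_def S3_def S4_def using fs fin by auto
  obtain f1 where f1: "bij_betw f1 R1 S1" using finite_same_card_bij[OF fR(1) fR(5) c1] by blast
  obtain f2 where f2: "bij_betw f2 R2 S2" using finite_same_card_bij[OF fR(2) fR(6) c2] by blast
  obtain f3 where f3: "bij_betw f3 R3 S3" using finite_same_card_bij[OF fR(3) fR(7) c3] by blast
  obtain f4 where f4: "bij_betw f4 R4 S4" using finite_same_card_bij[OF fR(4) fR(8) c4] by blast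
  define h34 where "h34 = (\<lambda>x. if x \<in> R3 then f3 x else f4 x)"
  define h234 where "h234 = (\<lambda>x. if x \<in> R2 then f2 x else h34 x)"
  define h where "h = (\<lambda>x. if x \<in> R1 then f1 x else h234 x)"
  have b34: "bij_betw h34 (R3 \<union> R4) (S3 \<union> S4)" unfolding h34_def
    by (rule glue[OF f3 f4]) (auto simp: R3_def R4_def S3_def S4_def)
  have b234: "bij_betw h234 (R2 \<union> (R3 \<union> R4)) (S2 \<union> (S3 \<union> S4))" unfolding h234_def
    by (rule glue[OF f2 b34]) (auto simp: R2_def R3_def R4_def S2_def S3_def S4_def)
  have b: "bij_betw h (R1 \<union> (R2 \<union> (R3 \<union> R4))) (S1 \<union> (S2 \<union> (S3 \<union> S4)))" unfolding h_def
    by (rule glue[OF f1 b234]) (auto simp: R1_def R2_def R3_def R4_def S1_def S2_def S3_def S4_def)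
  have P1: "R1 \<union> (R2 \<union> (R3 \<union> R4)) = P" unfolding R1_def R2_def R3_def R4_def using sub by blast
  have P2: "S1 \<union> (S2 \<union> (S3 \<union> S4)) = P" unfolding S1_def S2_def S3_def S4_def using sub by blast
  have i1: "h ` R1 = S1"
  proof -
    have "h ` R1 = f1 ` R1" by (rule image_cong) (auto simp: h_def)
    then show ?thesis using f1 by (simp add: bij_betw_def)
  qed
  have i2: "h ` R2 = S2"
  proof -
    have "h ` R2 = f2 ` R2" by (rule image_cong) (auto simp: h_def h234_def R1_def R2_def)
    then show ?thesis using f2 by (simp add: bij_betw_def)
  qed
  have i3: "h ` R3 = S3"
  proof -
    have "h ` R3 = f3 ` R3" by (rule image_cong) (auto simp: h_def h234_def h34_def R1_def R2_def R3_def)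
    then show ?thesis using f3 by (simp add: bij_betw_def)
  qed
  have "u = R1 \<union> R2" "v = R1 \<union> R3" unfolding R1_def R2_def R3_def by blast+
  moreover have "u' = S1 \<union> S2" "v' = S1 \<union> S3" unfolding S1_def S2_def S3_def by blast+
  ultimately have "h ` u = u'" "h ` v = v'" using i1 i2 i3 by (simp_all add: image_Un)
  then show ?thesis using b P1 P2 by auto
qed

definition cls :: "nat \<Rightarrow> nat set \<Rightarrow> nat set \<Rightarrow> nat \<times> nat \<times> nat \<times> nat \<times> nat \<times> nat" where
  "cls m y z = (card (y \<inter> Aset m), card (y \<inter> Bset m), card (z \<inter> Aset m), card (z \<inter> Bset m),
                card (y \<inter> z \<inter> Aset m), card (y \<inter> z \<inter> Bset m))"

lemma cls_trans:
  assumes y: "y \<in> Xv m" and z: "z \<in> Xv m" and y': "y' \<in> Xv m" and z': "z' \<in> Xv m"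
    and c: "cls m y z = cls m y' z'"
  shows "\<exists>\<sigma>\<in>G m. \<sigma> ` y = y' \<and> \<sigma> ` z = z'"
proof -
  have e1: "y \<inter> Aset m \<inter> (z \<inter> Aset m) = y \<inter> z \<inter> Aset m" for y z by blast
  have e2: "y \<inter> Bset m \<inter> (z \<inter> Bset m) = y \<inter> z \<inter> Bset m" for y z by blast
  obtain f where f: "bij_betw f (Aset m) (Aset m)" "f ` (y \<inter> Aset m) = y' \<inter> Aset m" "f ` (z \<inter> Aset m) = z' \<inter> Aset m"
    using region_bij[of "Aset m" "y \<inter> Aset m" "z \<inter> Aset m" "y' \<inter> Aset m" "z' \<inter> Aset m"] c
    unfolding e1 by (auto simp: cls_def)
  obtain g where g: "bij_betw g (Bset m) (Bset m)" "g ` (y \<inter> Bset m) = y' \<inter> Bset m" "g ` (z \<inter> Bset m) = z' \<inter> Bset m"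
    using region_bij[of "Bset m" "y \<inter> Bset m" "z \<inter> Bset m" "y' \<inter> Bset m" "z' \<inter> Bset m"] c
    unfolding e2 by (auto simp: cls_def)
  define \<sigma> where "\<sigma> = (\<lambda>x. if x \<in> Aset m then f x else g x)"
  have b: "bij_betw \<sigma> (Aset m \<union> Bset m) (Aset m \<union> Bset m)" unfolding \<sigma>_def
    by (rule glue[OF f(1) g(1) AB_disj AB_disj])
  have sA: "\<sigma> ` Aset m = Aset m"
  proof -
    have "\<sigma> ` Aset m = f ` Aset m" by (rule image_cong) (auto simp: \<sigma>_def)
    then show ?thesis using f(1) by (simp add: bij_betw_def)
  qed
  have gG: "\<sigma> \<in> G m" unfolding G_def using b sA S_AB by simp
  have img: "\<sigma> ` w = w' " if w: "w \<in> Xv m" and w': "w' \<in> Xv m"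
      and fa: "f ` (w \<inter> Aset m) = w' \<inter> Aset m" and gb: "g ` (w \<inter> Bset m) = w' \<inter> Bset m" for w w'
  proof -
    have "w = (w \<inter> Aset m) \<union> (w \<inter> Bset m)" using Xv_sub[OF w] S_AB by blast
    then have "\<sigma> ` w = \<sigma> ` (w \<inter> Aset m) \<union> \<sigma> ` (w \<inter> Bset m)" by (metis image_Un)
    moreover have "\<sigma> ` (w \<inter> Aset m) = f ` (w \<inter> Aset m)" by (rule image_cong) (auto simp: \<sigma>_def)
    moreover have "\<sigma> ` (w \<inter> Bset m) = g ` (w \<inter> Bset m)" by (rule image_cong) (use AB_disj in \<open>auto simp: \<sigma>_def\<close>)
    moreover have "w' = (w' \<inter> Aset m) \<union> (w' \<inter> Bset m)" using Xv_sub[OF w'] S_AB by blast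
    ultimately show ?thesis using fa gb by simp
  qed
  show ?thesis using gG img[OF y y' f(2) g(2)] img[OF z z' f(3) g(3)] by blast
qed

lemma Talg_cls:
  assumes M: "M \<in> Talg m" and y: "y \<in> Xv m" and z: "z \<in> Xv m" and y': "y' \<in> Xv m" and z': "z' \<in> Xv m"
    and c: "cls m y z = cls m y' z'"
  shows "M y z = M y' z'"
proof -
  obtain \<sigma> where s: "\<sigma> \<in> G m" "\<sigma> ` y = y'" "\<sigma> ` z = z'" using cls_trans[OF y z y' z' c] by blast
  have "M (\<sigma> ` y) (\<sigma> ` z) = M y z" using Talg_invar[OF M] s(1) y z by (simp add: invar_def)
  then show ?thesis using s by simp
qed

definition Cls :: "nat \<Rightarrow> (nat \<times> nat \<times> nat \<times> nat \<times> nat \<times> nat) set" where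
  "Cls m = (\<lambda>(y,z). cls m y z) ` (Xv m \<times> Xv m)"

definition Ind :: "nat \<Rightarrow> nat \<times> nat \<times> nat \<times> nat \<times> nat \<times> nat \<Rightarrow> mx" where
  "Ind m \<beta> = (\<lambda>y z. if y \<in> Xv m \<and> z \<in> Xv m \<and> cls m y z = \<beta> then 1 else 0)"

definition rep :: "nat \<Rightarrow> nat \<times> nat \<times> nat \<times> nat \<times> nat \<times> nat \<Rightarrow> nat set \<times> nat set" where
  "rep m \<beta> = (SOME p. fst p \<in> Xv m \<and> snd p \<in> Xv m \<and> cls m (fst p) (snd p) = \<beta>)"

lemma finite_Cls[simp]: "finite (Cls m)" by (simp add: Cls_def)

lemma rep_prop: "\<beta> \<in> Cls m \<Longrightarrow> fst (rep m \<beta>) \<in> Xv m \<and> snd (rep m \<beta>) \<in> Xv m \<and> cls m (fst (rep m \<beta>)) (snd (rep m \<beta>)) = \<beta>"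
proof -
  assume "\<beta> \<in> Cls m"
  then obtain y z where "y \<in> Xv m" "z \<in> Xv m" "cls m y z = \<beta>" by (auto simp: Cls_def)
  then have "\<exists>p. fst p \<in> Xv m \<and> snd p \<in> Xv m \<and> cls m (fst p) (snd p) = \<beta>" by (intro exI[of _ "(y,z)"]) simp
  then show ?thesis unfolding rep_def by (rule someI_ex)
qed

lemma cls_in: "y \<in> Xv m \<Longrightarrow> z \<in> Xv m \<Longrightarrow> cls m y z \<in> Cls m"
  by (force simp: Cls_def)

lemma fun_sum_apply: "finite S \<Longrightarrow> (sum f S :: mx) x y = (\<Sum>i\<in>S. f i x y)"
  by (induction rule: finite_induct) auto

lemma decomp:
  assumes M: "M \<in> Talg m"
  shows "M = (\<Sum>\<beta>\<in>Cls m. mscale (M (fst (rep m \<beta>)) (snd (rep m \<beta>))) (Ind m \<beta>))"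
proof (rule ext, rule ext)
  fix y z
  show "M y z = (\<Sum>\<beta>\<in>Cls m. mscale (M (fst (rep m \<beta>)) (snd (rep m \<beta>))) (Ind m \<beta>)) y z"
  proof (cases "y \<in> Xv m \<and> z \<in> Xv m")
    case True
    have "(\<Sum>\<beta>\<in>Cls m. mscale (M (fst (rep m \<beta>)) (snd (rep m \<beta>))) (Ind m \<beta>)) y z
        = (\<Sum>\<beta>\<in>Cls m. if \<beta> = cls m y z then M (fst (rep m \<beta>)) (snd (rep m \<beta>)) else 0)"
      unfolding fun_sum_apply[OF finite_Cls] by (rule sum.cong) (auto simp: mscale_def Ind_def True)
    also have "\<dots> = M (fst (rep m (cls m y z))) (snd (rep m (cls m y z)))"
      using cls_in True by (simp add: sum.delta')
    also have "\<dots> = M y z"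
      using rep_prop[OF cls_in] True Talg_cls[OF M] by metis
    finally show ?thesis by simp
  next
    case False
    then have "M y z = 0" using Talg_supp[OF M] by blast
    moreover have "(\<Sum>\<beta>\<in>Cls m. mscale (M (fst (rep m \<beta>)) (snd (rep m \<beta>))) (Ind m \<beta>)) y z = 0"
      unfolding fun_sum_apply[OF finite_Cls] using False by (intro sum.neutral) (auto simp: mscale_def Ind_def)
    ultimately show ?thesis by simp
  qed
qed

lemma vs: "vector_space mscale"
  by unfold_locales (auto simp: mscale_def fun_eq_iff algebra_simps)

lemma Ind_rep: "\<beta> \<in> Cls m \<Longrightarrow> \<beta>' \<in> Cls m \<Longrightarrow> Ind m \<beta>' (fst (rep m \<beta>)) (snd (rep m \<beta>)) = (if \<beta>' = \<beta> then 1 else 0)"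
  using rep_prop[of \<beta> m] by (auto simp: Ind_def)

lemma Ind_inj: "inj_on (Ind m) (Cls m)"
proof (rule inj_onI)
  fix a b assume a: "a \<in> Cls m" and b: "b \<in> Cls m" and e: "Ind m a = Ind m b"
  have "Ind m a (fst (rep m a)) (snd (rep m a)) = 1" using Ind_rep[OF a a] by simp
  then have "Ind m b (fst (rep m a)) (snd (rep m a)) = 1" using e by simp
  then show "a = b" using Ind_rep[OF a b] by (simp split: if_splits)
qed

lemma dim_eq:
  assumes gen: "\<And>\<beta>. \<beta> \<in> Cls m \<Longrightarrow> Ind m \<beta> \<in> Talg m"
  shows "vector_space.dim mscale (Talg m) = card (Cls m)"
proof -
  interpret V: vector_space mscale by (rule vs)
  let ?B = "Ind m ` Cls m"
  have sub: "?B \<subseteq> Talg m" using gen by blast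
  have sp: "Talg m \<subseteq> V.span ?B"
  proof
    fix M assume M: "M \<in> Talg m"
    have "(\<Sum>\<beta>\<in>Cls m. mscale (M (fst (rep m \<beta>)) (snd (rep m \<beta>))) (Ind m \<beta>)) \<in> V.span ?B"
      by (rule V.span_sum) (intro V.span_scale V.span_base, blast)
    then show "M \<in> V.span ?B" using decomp[OF M] by simp
  qed
  have ind: "V.independent ?B"
  proof (rule V.independent_if_scalars_zero)
    show "finite ?B" by simp
  next
    fix f x assume s: "(\<Sum>x\<in>?B. mscale (f x) x) = 0" and x: "x \<in> ?B"
    then obtain \<beta> where b: "\<beta> \<in> Cls m" "x = Ind m \<beta>" by blast
    let ?y = "fst (rep m \<beta>)" and ?z = "snd (rep m \<beta>)"
    have "0 = (\<Sum>x\<in>?B. mscale (f x) x) ?y ?z" using s by simp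
    also have "\<dots> = (\<Sum>x\<in>?B. f x * x ?y ?z)" by (simp add: fun_sum_apply mscale_def)
    also have "\<dots> = (\<Sum>\<beta>'\<in>Cls m. f (Ind m \<beta>') * Ind m \<beta>' ?y ?z)"
      by (rule sum.reindex[OF Ind_inj, unfolded comp_def])
    also have "\<dots> = (\<Sum>\<beta>'\<in>Cls m. if \<beta>' = \<beta> then f (Ind m \<beta>') else 0)"
      by (rule sum.cong) (use Ind_rep[OF b(1)] in auto)
    also have "\<dots> = f x" using b by (simp add: sum.delta')
    finally show "f x = 0" by simp
  qed
  have "card ?B = card (Cls m)" using card_image[OF Ind_inj] .
  then show ?thesis using V.dim_unique[OF sub sp ind] by simp
qed

abbreviation YA :: "nat \<Rightarrow> nat set \<Rightarrow> nat set" where "YA m y \<equiv> y \<inter> Aset m"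
abbreviation YB :: "nat \<Rightarrow> nat set \<Rightarrow> nat set" where "YB m y \<equiv> y \<inter> Bset m"

lemma phi_form:
  assumes y: "y \<in> Xv m"
  shows "(card y = m \<and> phi m y = 2 * card (YB m y) \<and> card (YA m y) + card (YB m y) = m) \<or>
         (card y = m+1 \<and> card (YB m y) \<ge> 1 \<and> phi m y = 2 * card (YB m y) - 1 \<and> card (YA m y) + card (YB m y) = m+1)"
proof -
  have cs: "card y = card (YA m y) + card (YB m y)" using card_split Xv_sub y by blast
  have cA: "card (YA m y) \<le> m" using cardA_le y by blast
  show ?thesis using y cs cA unfolding phi_def Xv_iff by auto
qed

lemma phi_cardeq:
  assumes "y \<in> Xv m" "z \<in> Xv m" "card (YA m y) = card (YA m z)" "card (YB m y) = card (YB m z)"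
  shows "phi m y = phi m z"
proof -
  have "card y = card z" using card_split[OF Xv_sub[OF assms(1)]] card_split[OF Xv_sub[OF assms(2)]] assms(3,4) by simp
  then show ?thesis unfolding phi_def using assms(4) by simp
qed

lemma phi_eq_cards:
  assumes y: "y \<in> Xv m" and z: "z \<in> Xv m" and e: "phi m y = phi m z"
  shows "card (YA m y) = card (YA m z) \<and> card (YB m y) = card (YB m z) \<and> card y = card z"
  using phi_form[OF y] phi_form[OF z] e by (auto; presburger)

lemma phi_le_cards:
  assumes y: "y \<in> Xv m" and z: "z \<in> Xv m" and e: "phi m y \<le> phi m z"
  shows "card (YA m z) \<le> card (YA m y) \<and> card (YB m y) \<le> card (YB m z)"
  using phi_form[OF y] phi_form[OF z] e by auto

lemma phi_lt_cards:
  assumes y: "y \<in> Xv m" and z: "z \<in> Xv m" and e: "phi m y < phi m z"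
  shows "(card y = m \<longrightarrow> card (YB m y) < card (YB m z)) \<and> (card y = m+1 \<longrightarrow> card (YA m z) < card (YA m y))"
  using phi_form[OF y] phi_form[OF z] e by auto

definition nbA :: "nat \<Rightarrow> nat" where "nbA i = (if even i then i - 1 else i + 1)"
definition nbB :: "nat \<Rightarrow> nat" where "nbB i = (if even i then i + 1 else i - 1)"

lemma phi_even: "y \<in> Xv m \<Longrightarrow> even (phi m y) \<longleftrightarrow> card y = m"
  using phi_form[of y m] by auto

lemma adj_type:
  assumes "adj m x z"
  shows "(YB m z = YB m x \<and> phi m z = nbA (phi m x)) \<or> (YA m z = YA m x \<and> phi m z = nbB (phi m x))"
proof -
  have x: "x \<in> Xv m" and z: "z \<in> Xv m" using assms by (auto simp: adj_def)
  have fx: "finite x" using x Xv_fin by auto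
  note px = phi_form[OF x] and pz = phi_form[OF z]
  from adj_cases[OF assms] show ?thesis
  proof
    assume "\<exists>e. e \<in> Sset m \<and> e \<notin> x \<and> z = insert e x \<and> card x = m"
    then obtain e where e: "e \<in> Sset m" "e \<notin> x" "z = insert e x" "card x = m" by blast
    have cz: "card z = m + 1" using e fx by simp
    from AB_cases[OF e(1)] show ?thesis
    proof
      assume eA: "e \<in> Aset m \<and> e \<notin> Bset m"
      have zB: "YB m z = YB m x" using e eA by auto
      have "YA m z = insert e (YA m x)" using e eA by auto
      then have "card (YA m z) = card (YA m x) + 1" using e fx by simp
      then show ?thesis using zB px pz cz e(4) by (auto simp: nbA_def)
    next
      assume eB: "e \<in> Bset m \<and> e \<notin> Aset m"
      have zA: "YA m z = YA m x" using e eB by auto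
      have "YB m z = insert e (YB m x)" using e eB by auto
      then have "card (YB m z) = card (YB m x) + 1" using e fx by simp
      then show ?thesis using zA px pz cz e(4) by (auto simp: nbB_def)
    qed
  next
    assume "\<exists>e. e \<in> x \<and> z = x - {e} \<and> card x = m+1"
    then obtain e where e: "e \<in> x" "z = x - {e}" "card x = m+1" by blast
    have cz: "card z = m" using e fx by simp
    have eS: "e \<in> Sset m" using e x Xv_sub by blast
    from AB_cases[OF eS] show ?thesis
    proof
      assume eA: "e \<in> Aset m \<and> e \<notin> Bset m"
      have zB: "YB m z = YB m x" using e eA by auto
      then show ?thesis using zB px pz cz e(3) by (auto simp: nbA_def)
    next
      assume eB: "e \<in> Bset m \<and> e \<notin> Aset m"
      have zA: "YA m z = YA m x" using e eB by auto
      have "YB m x = insert e (YB m z)" using e eB by auto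
      then have "card (YB m x) = card (YB m z) + 1" using e fx by simp
      then show ?thesis using zA px pz cz e(3) by (auto simp: nbB_def)
    qed
  qed
qed

lemma two_step:
  assumes a1: "adj m y w" and a2: "adj m w z" and c: "card y = card z"
  shows "card (y - z) \<le> 1"
proof -
  have y: "y \<in> Xv m" and w: "w \<in> Xv m" and z: "z \<in> Xv m" using a1 a2 by (auto simp: adj_def)
  have fw: "finite w" "finite y" using w y Xv_fin by auto
  from adj_cases[OF a1] show ?thesis
  proof
    assume "\<exists>e. e \<in> Sset m \<and> e \<notin> y \<and> w = insert e y \<and> card y = m"
    then obtain e where e: "w = insert e y" "card y = m" "e \<notin> y" by blast
    from adj_cases[OF a2] show ?thesis
    proof
      assume "\<exists>e'. e' \<in> Sset m \<and> e' \<notin> w \<and> z = insert e' w \<and> card w = m"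
      then have "card w = m" by blast
      moreover have "card w = m + 1" using e fw by simp
      ultimately show ?thesis by simp
    next
      assume "\<exists>e'. e' \<in> w \<and> z = w - {e'} \<and> card w = m+1"
      then obtain e' where "z = w - {e'}" by blast
      then have "y - z \<subseteq> {e'}" using e by blast
      then show ?thesis using card_mono[of "{e'}" "y - z"] by simp
    qed
  next
    assume "\<exists>e. e \<in> y \<and> w = y - {e} \<and> card y = m+1"
    then obtain e where e: "w = y - {e}" and cy: "card y = m+1" by blast
    then have "y - z \<subseteq> {e} \<union> (w - z)" by blast
    moreover have "w - z = {}"
    proof -
      from adj_cases[OF a2] show ?thesis
      proof
        assume "\<exists>e'. e' \<in> Sset m \<and> e' \<notin> w \<and> z = insert e' w \<and> card w = m"
        then show ?thesis by blast
      next
        assume "\<exists>e'. e' \<in> w \<and> z = w - {e'} \<and> card w = m+1"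
        then have "card z = m" "card w = m+1" using fw by auto
        then show ?thesis using c cy by simp
      qed
    qed
    ultimately have "y - z \<subseteq> {e}" by blast
    then show ?thesis using card_mono[of "{e}" "y - z"] by simp
  qed
qed

lemmas nn_simps[simp] = nn_A1 nn_Estar nn_Imx nn_mmult(1)

definition sw :: "nat \<Rightarrow> nat \<Rightarrow> nat \<Rightarrow> mx" where
  "sw m i k = mmult m (mmult m (mmult m (mmult m (Estar m i) (A1 m)) (Estar m k)) (A1 m)) (Estar m i)"

lemma nn_sw[simp]: "nn (sw m i k)" by (simp add: sw_def)

lemma sw_Talg: "sw m i k \<in> Talg m"
  unfolding sw_def by (intro Talg.T_mult Estar_Talg Talg.T_A)

lemma sw_nz: "sw m i k y z \<noteq> 0 \<longleftrightarrow> y \<in> Xv m \<and> phi m y = i \<and> z \<in> Xv m \<and> phi m z = i \<and> (\<exists>w. adj m y w \<and> phi m w = k \<and> adj m w z)"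
  unfolding sw_def by (auto simp: nn_mmult(2) A1_nz Estar_nz adj_def)

lemma nb_facts: "nbA i \<noteq> nbB i" "nbB (nbA i) \<noteq> i" "nbA (nbB i) \<noteq> i"
  by (auto simp: nbA_def nbB_def) presburger+

lemma SA_dest:
  assumes "sw m i (nbA i) y z \<noteq> 0"
  shows "y \<in> Xv m \<and> z \<in> Xv m \<and> phi m y = i \<and> phi m z = i \<and> YB m y = YB m z \<and> card y = card z \<and> card (YA m y - YA m z) \<le> 1"
proof -
  obtain w where h: "y \<in> Xv m" "phi m y = i" "z \<in> Xv m" "phi m z = i" "adj m y w" "phi m w = nbA i" "adj m w z"
    using assms sw_nz by blast
  have 1: "YB m w = YB m y" using adj_type[OF h(5)] h nb_facts(1) by metis
  have 2: "YB m z = YB m w" using adj_type[OF h(7)] h nb_facts(2) by metis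
  have c: "card y = card z" using phi_eq_cards h by metis
  have "card (y - z) \<le> 1" by (rule two_step[OF h(5) h(7) c])
  moreover have "YA m y - YA m z \<subseteq> y - z" by blast
  moreover have "finite (y - z)" using h Xv_fin by blast
  ultimately have "card (YA m y - YA m z) \<le> 1" using card_mono le_trans by blast
  then show ?thesis using h 1 2 c by simp
qed

lemma SB_dest:
  assumes "sw m i (nbB i) y z \<noteq> 0"
  shows "y \<in> Xv m \<and> z \<in> Xv m \<and> phi m y = i \<and> phi m z = i \<and> YA m y = YA m z \<and> card y = card z \<and> card (YB m y - YB m z) \<le> 1"
proof -
  obtain w where h: "y \<in> Xv m" "phi m y = i" "z \<in> Xv m" "phi m z = i" "adj m y w" "phi m w = nbB i" "adj m w z"
    using assms sw_nz by blast
  have 1: "YA m w = YA m y" using adj_type[OF h(5)] h nb_facts(1) by metis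
  have 2: "YA m z = YA m w" using adj_type[OF h(7)] h nb_facts(3) by metis
  have c: "card y = card z" using phi_eq_cards h by metis
  have "card (y - z) \<le> 1" by (rule two_step[OF h(5) h(7) c])
  moreover have "YB m y - YB m z \<subseteq> y - z" by blast
  moreover have "finite (y - z)" using h Xv_fin by blast
  ultimately have "card (YB m y - YB m z) \<le> 1" using card_mono le_trans by blast
  then show ?thesis using h 1 2 c by simp
qed

fun mpow :: "nat \<Rightarrow> mx \<Rightarrow> nat \<Rightarrow> mx" where
  "mpow m M 0 = Imx m"
| "mpow m M (Suc k) = mmult m M (mpow m M k)"

lemma nn_mpow[simp]: "nn M \<Longrightarrow> nn (mpow m M k)" by (induction k) auto

lemma mpow_Talg: "M \<in> Talg m \<Longrightarrow> mpow m M k \<in> Talg m"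
  by (induction k) (auto intro: Talg.T_I Talg.T_mult)

lemma card_diff_tri:
  assumes "finite a" "finite b"
  shows "card (a - c) \<le> card (a - b) + card (b - c)"
proof -
  have "a - c \<subseteq> (a - b) \<union> (b - c)" by blast
  then have "card (a - c) \<le> card ((a - b) \<union> (b - c))" using assms by (intro card_mono) auto
  also have "\<dots> \<le> card (a - b) + card (b - c)" by (rule card_Un_le)
  finally show ?thesis .
qed

lemma SA_pow_dest:
  "mpow m (sw m i (nbA i)) k y z \<noteq> 0 \<Longrightarrow>
   y \<in> Xv m \<and> z \<in> Xv m \<and> YB m y = YB m z \<and> card y = card z \<and> card (YA m y - YA m z) \<le> k"
proof (induction k arbitrary: y)
  case 0 then show ?case by (auto simp: Imx_nz)
next
  case (Suc k)
  then obtain w where w: "w \<in> Xv m" "sw m i (nbA i) y w \<noteq> 0" "mpow m (sw m i (nbA i)) k w z \<noteq> 0"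
    by (auto simp: nn_mmult(2))
  note a = SA_dest[OF w(2)] and b = Suc.IH[OF w(3)]
  have "card (YA m y - YA m z) \<le> card (YA m y - YA m w) + card (YA m w - YA m z)"
    using a Xv_fin by (intro card_diff_tri) auto
  then show ?case using a b by simp
qed

lemma SB_pow_dest:
  "mpow m (sw m i (nbB i)) k y z \<noteq> 0 \<Longrightarrow>
   y \<in> Xv m \<and> z \<in> Xv m \<and> YA m y = YA m z \<and> card y = card z \<and> card (YB m y - YB m z) \<le> k"
proof (induction k arbitrary: y)
  case 0 then show ?case by (auto simp: Imx_nz)
next
  case (Suc k)
  then obtain w where w: "w \<in> Xv m" "sw m i (nbB i) y w \<noteq> 0" "mpow m (sw m i (nbB i)) k w z \<noteq> 0"
    by (auto simp: nn_mmult(2))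
  note a = SB_dest[OF w(2)] and b = Suc.IH[OF w(3)]
  have "card (YB m y - YB m z) \<le> card (YB m y - YB m w) + card (YB m w - YB m z)"
    using a Xv_fin by (intro card_diff_tri) auto
  then show ?case using a b by simp
qed

fun Up :: "nat \<Rightarrow> nat \<Rightarrow> nat \<Rightarrow> mx" where
  "Up m i 0 = Estar m i"
| "Up m i (Suc d) = mmult m (mmult m (Estar m i) (A1 m)) (Up m (Suc i) d)"

lemma nn_Up[simp]: "nn (Up m i d)" by (induction d arbitrary: i) auto

lemma Up_Talg: "Up m i d \<in> Talg m"
  by (induction d arbitrary: i) (auto intro: Talg.T_mult Estar_Talg Talg.T_A)

lemma Up_dest:
  "Up m i d y z \<noteq> 0 \<Longrightarrow> y \<in> Xv m \<and> z \<in> Xv m \<and> phi m y = i \<and> phi m z = i + d \<and> YA m z \<subseteq> YA m y \<and> YB m y \<subseteq> YB m z"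
proof (induction d arbitrary: i y)
  case 0 then show ?case by (auto simp: Estar_nz)
next
  case (Suc d)
  then obtain w where w: "y \<in> Xv m" "phi m y = i" "adj m y w" "Up m (Suc i) d w z \<noteq> 0"
    by (auto simp: nn_mmult(2) Estar_nz A1_nz)
  note b = Suc.IH[OF w(4)]
  have "upstep m y w" using adj_up_aux[OF w(3)] b w(2) by (auto simp: upstep_def)
  then show ?case using b w unfolding upstep_def by auto
qed

lemma Xv_same_card: "y \<in> Xv m \<Longrightarrow> z \<subseteq> Sset m \<Longrightarrow> card z = card y \<Longrightarrow> z \<in> Xv m"
  by (simp add: Xv_iff)

lemma swap_facts:
  assumes y: "y \<in> Xv m" and a: "a \<in> y" and a': "a' \<in> Sset m" "a' \<notin> y" and z: "z = insert a' (y - {a})"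
  shows "z \<in> Xv m" "card z = card y"
proof -
  have fy: "finite y" using y Xv_fin by blast
  have ne: "a \<noteq> a'" using a a' by blast
  show c: "card z = card y"
  proof -
    have "card (y - {a}) = card y - 1" using fy a by simp
    moreover have "card y > 0" using fy a card_gt_0_iff by blast
    moreover have "a' \<notin> y - {a}" using a' by blast
    moreover have "finite (y - {a})" using fy by blast
    ultimately show ?thesis unfolding z by simp
  qed
  have "z \<subseteq> Sset m" unfolding z using Xv_sub[OF y] a' by blast
  then show "z \<in> Xv m" using Xv_same_card[OF y] c by blast
qed

lemma SA_step_intro:
  assumes y: "y \<in> Xv m" and a: "a \<in> YA m y" and a': "a' \<in> Aset m" "a' \<notin> y" and z: "z = insert a' (y - {a})"
  shows "sw m (phi m y) (nbA (phi m y)) y z \<noteq> 0 \<and> z \<in> Xv m \<and> YB m z = YB m y \<and> phi m z = phi m y \<and> card z = card y"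
proof -
  have a'S: "a' \<in> Sset m" using a' S_AB by blast
  have ay: "a \<in> y" using a by blast
  note sf = swap_facts[OF y ay a'S a'(2) z]
  have fy: "finite y" using y Xv_fin by blast
  have ne: "a \<noteq> a'" using a a' by blast
  have zB: "YB m z = YB m y" unfolding z using a a' AB_disj by blast
  have pz: "phi m z = phi m y" unfolding phi_def zB using sf a by simp
  have ex: "\<exists>w. adj m y w \<and> phi m w = nbA (phi m y) \<and> adj m w z"
  proof (cases "card y = m")
    case True
    define w where "w = insert a' y"
    have cw: "card w = m + 1" unfolding w_def using True fy a'(2) by simp
    have "w \<subseteq> Sset m" unfolding w_def using Xv_sub[OF y] a'S by blast
    then have wX: "w \<in> Xv m" using cw by (simp add: Xv_iff)
    have wB: "YB m w = YB m y" unfolding w_def using a' AB_disj by blast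
    have "card (YB m y) \<ge> 1"
    proof -
      have "YA m y \<subset> Aset m" using a' by blast
      then have "card (YA m y) < card (Aset m)" by (rule psubset_card_mono[OF fin_A])
      then have "card (YA m y) < m" by simp
      then show ?thesis using phi_form[OF y] True by linarith
    qed
    then have pw: "phi m w = nbA (phi m y)" unfolding phi_def nbA_def wB using cw True by simp
    have "y \<subset> w" unfolding w_def using a' by blast
    then have a1: "adj m y w" using y wX by (simp add: adj_def)
    have "z = w - {a}" unfolding z w_def using ne by blast
    then have "z \<subset> w" using a w_def by blast
    then have a2: "adj m w z" using sf wX by (simp add: adj_def)
    show ?thesis using a1 a2 pw by blast
  next
    case False
    then have cy: "card y = m + 1" using y by (simp add: Xv_iff)
    define w where "w = y - {a}"
    have cw: "card w = m" unfolding w_def using cy fy a by simp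
    have "w \<subseteq> Sset m" unfolding w_def using Xv_sub[OF y] by blast
    then have wX: "w \<in> Xv m" using cw by (simp add: Xv_iff)
    have wB: "YB m w = YB m y" unfolding w_def using a AB_disj by blast
    have "card (YB m y) \<ge> 1" using phi_form[OF y] cy by auto
    then have pw: "phi m w = nbA (phi m y)" unfolding phi_def nbA_def wB using cw cy by simp
    have "w \<subset> y" unfolding w_def using a by blast
    then have a1: "adj m y w" using y wX by (simp add: adj_def)
    have "z = insert a' w" unfolding z w_def by blast
    then have "w \<subset> z" using a' w_def by blast
    then have a2: "adj m w z" using sf wX by (simp add: adj_def)
    show ?thesis using a1 a2 pw by blast
  qed
  show ?thesis using ex sf zB pz y by (simp add: sw_nz)
qed

lemma SB_step_intro:
  assumes y: "y \<in> Xv m" and a: "a \<in> YB m y" and a': "a' \<in> Bset m" "a' \<notin> y" and z: "z = insert a' (y - {a})"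
  shows "sw m (phi m y) (nbB (phi m y)) y z \<noteq> 0 \<and> z \<in> Xv m \<and> YA m z = YA m y \<and> phi m z = phi m y \<and> card z = card y"
proof -
  have a'S: "a' \<in> Sset m" using a' S_AB by blast
  have ay: "a \<in> y" using a by blast
  note sf = swap_facts[OF y ay a'S a'(2) z]
  have fy: "finite y" using y Xv_fin by blast
  have ne: "a \<noteq> a'" using a a' by blast
  have zA: "YA m z = YA m y" unfolding z using a a' AB_disj by blast
  have czB: "card (YB m z) = card (YB m y)"
    using card_split[OF Xv_sub[OF y]] card_split[OF Xv_sub[OF sf(1)]] sf(2) zA by simp
  have pz: "phi m z = phi m y" unfolding phi_def czB using sf by simp
  have ex: "\<exists>w. adj m y w \<and> phi m w = nbB (phi m y) \<and> adj m w z"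
  proof (cases "card y = m")
    case True
    define w where "w = insert a' y"
    have cw: "card w = m + 1" unfolding w_def using True fy a' by simp
    have "w \<subseteq> Sset m" unfolding w_def using Xv_sub[OF y] a'S by blast
    then have wX: "w \<in> Xv m" using cw by (simp add: Xv_iff)
    have "YB m w = insert a' (YB m y)" unfolding w_def using a' by blast
    then have wB: "card (YB m w) = card (YB m y) + 1" using fy a' by simp
    have pw: "phi m w = nbB (phi m y)" unfolding phi_def nbB_def using wB cw True by simp
    have "y \<subset> w" unfolding w_def using a' by blast
    then have a1: "adj m y w" using y wX by (simp add: adj_def)
    have "z = w - {a}" unfolding z w_def using ne by blast
    then have "z \<subset> w" using a w_def by blast
    then have a2: "adj m w z" using sf wX by (simp add: adj_def)
    show ?thesis using a1 a2 pw by blast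
  next
    case False
    then have cy: "card y = m + 1" using y by (simp add: Xv_iff)
    define w where "w = y - {a}"
    have cw: "card w = m" unfolding w_def using cy fy a by simp
    have "w \<subseteq> Sset m" unfolding w_def using Xv_sub[OF y] by blast
    then have wX: "w \<in> Xv m" using cw by (simp add: Xv_iff)
    have "YB m w = YB m y - {a}" unfolding w_def by blast
    then have wB: "card (YB m w) = card (YB m y) - 1" using fy a by simp
    have "card (YB m y) \<ge> 1" using phi_form[OF y] cy by auto
    then have pw: "phi m w = nbB (phi m y)" unfolding phi_def nbB_def using wB cw cy by (cases "card (YB m y)") auto
    have "w \<subset> y" unfolding w_def using a by blast
    then have a1: "adj m y w" using y wX by (simp add: adj_def)
    have "z = insert a' w" unfolding z w_def by blast
    then have "w \<subset> z" using a' w_def by blast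
    then have a2: "adj m w z" using sf wX by (simp add: adj_def)
    show ?thesis using a1 a2 pw by blast
  qed
  show ?thesis using ex sf zA pz y by (simp add: sw_nz)
qed

lemma Xv_AB: "y \<in> Xv m \<Longrightarrow> y = YA m y \<union> YB m y"
  using Xv_sub S_AB by blast

lemma same_parts_eq:
  assumes "y \<in> Xv m" "y' \<in> Xv m" "YA m y = YA m y'" "YB m y = YB m y'"
  shows "y = y'"
  using Xv_AB[OF assms(1)] Xv_AB[OF assms(2)] assms(3,4) by simp

lemma diff_card_sym:
  assumes "finite A" "finite B" "card A = card B"
  shows "card (B - A) = card (A - B)"
  using assms by (simp add: card_Diff_subset_Int Int_commute)

lemma SA_pow_intro:
  "y \<in> Xv m \<Longrightarrow> y' \<in> Xv m \<Longrightarrow> card y = card y' \<Longrightarrow> YB m y = YB m y' \<Longrightarrow> card (YA m y - YA m y') = k \<Longrightarrow>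
   mpow m (sw m (phi m y) (nbA (phi m y))) k y y' \<noteq> 0"
proof (induction k arbitrary: y)
  case 0
  have f: "finite (YA m y)" "finite (YA m y')" using 0 Xv_fin by blast+
  have s: "YA m y \<subseteq> YA m y'" using 0 f by auto
  have "card (YA m y) = card (YA m y')"
    using card_split[OF Xv_sub[OF 0(1)]] card_split[OF Xv_sub[OF 0(2)]] 0 by simp
  then have "YA m y = YA m y'" using card_subset_eq[OF f(2) s] by simp
  then have "y = y'" using same_parts_eq 0 by blast
  then show ?case using 0 by (simp add: Imx_nz)
next
  case (Suc k)
  have f: "finite (YA m y)" "finite (YA m y')" using Suc Xv_fin by blast+
  have ce: "card (YA m y) = card (YA m y')"
    using card_split[OF Xv_sub[OF Suc(2)]] card_split[OF Xv_sub[OF Suc(3)]] Suc by simp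
  obtain a where a: "a \<in> YA m y - YA m y'" using Suc(6) by (metis card.empty ex_in_conv nat.distinct(1))
  have "card (YA m y' - YA m y) = Suc k" using diff_card_sym[OF f ce] Suc(6) by simp
  then obtain a' where a': "a' \<in> YA m y' - YA m y" by (metis card.empty ex_in_conv nat.distinct(1))
  define z where "z = insert a' (y - {a})"
  have a'1: "a' \<in> Aset m" "a' \<notin> y" using a' by blast+
  have aY: "a \<in> YA m y" using a by blast
  note st = SA_step_intro[OF Suc(2) aY a'1 z_def]
  have "YA m z - YA m y' = (YA m y - YA m y') - {a}" unfolding z_def using a' by blast
  then have ck: "card (YA m z - YA m y') = k" using Suc(6) card_Diff_singleton[OF a] by simp
  have ih: "mpow m (sw m (phi m z) (nbA (phi m z))) k z y' \<noteq> 0"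
    using Suc.IH[of z] st Suc ck by simp
  show ?case using st ih Suc(3) by (auto simp: nn_mmult(2))
qed

lemma SB_pow_intro:
  "y \<in> Xv m \<Longrightarrow> y' \<in> Xv m \<Longrightarrow> card y = card y' \<Longrightarrow> YA m y = YA m y' \<Longrightarrow> card (YB m y - YB m y') = k \<Longrightarrow>
   mpow m (sw m (phi m y) (nbB (phi m y))) k y y' \<noteq> 0"
proof (induction k arbitrary: y)
  case 0
  have f: "finite (YB m y)" "finite (YB m y')" using 0 Xv_fin by blast+
  have s: "YB m y \<subseteq> YB m y'" using 0 f by auto
  have "card (YB m y) = card (YB m y')"
    using card_split[OF Xv_sub[OF 0(1)]] card_split[OF Xv_sub[OF 0(2)]] 0 by simp
  then have "YB m y = YB m y'" using card_subset_eq[OF f(2) s] by simp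
  then have "y = y'" using same_parts_eq 0 by blast
  then show ?case using 0 by (simp add: Imx_nz)
next
  case (Suc k)
  have f: "finite (YB m y)" "finite (YB m y')" using Suc Xv_fin by blast+
  have ce: "card (YB m y) = card (YB m y')"
    using card_split[OF Xv_sub[OF Suc(2)]] card_split[OF Xv_sub[OF Suc(3)]] Suc by simp
  obtain a where a: "a \<in> YB m y - YB m y'" using Suc(6) by (metis card.empty ex_in_conv nat.distinct(1))
  have "card (YB m y' - YB m y) = Suc k" using diff_card_sym[OF f ce] Suc(6) by simp
  then obtain a' where a': "a' \<in> YB m y' - YB m y" by (metis card.empty ex_in_conv nat.distinct(1))
  define z where "z = insert a' (y - {a})"
  have a'1: "a' \<in> Bset m" "a' \<notin> y" using a' by blast+
  have aY: "a \<in> YB m y" using a by blast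
  note st = SB_step_intro[OF Suc(2) aY a'1 z_def]
  have "YB m z - YB m y' = (YB m y - YB m y') - {a}" unfolding z_def using a' by blast
  then have ck: "card (YB m z - YB m y') = k" using Suc(6) card_Diff_singleton[OF a] by simp
  have ih: "mpow m (sw m (phi m z) (nbB (phi m z))) k z y' \<noteq> 0"
    using Suc.IH[of z] st Suc ck by simp
  show ?case using st ih Suc(3) by (auto simp: nn_mmult(2))
qed

lemma Up_intro:
  "y \<in> Xv m \<Longrightarrow> z \<in> Xv m \<Longrightarrow> phi m y = i \<Longrightarrow> phi m z = i + d \<Longrightarrow> YA m z \<subseteq> YA m y \<Longrightarrow> YB m y \<subseteq> YB m z \<Longrightarrow>
   Up m i d y z \<noteq> 0"
proof (induction d arbitrary: i y)
  case 0
  have f: "finite (YA m y)" "finite (YB m z)" using 0 Xv_fin by blast+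
  have c: "card (YA m y) = card (YA m z)" "card (YB m y) = card (YB m z)"
    using phi_eq_cards[OF 0(1) 0(2)] 0 by auto
  have "YA m y = YA m z" using card_subset_eq[OF f(1) 0(5)] c by simp
  moreover have "YB m y = YB m z" using card_subset_eq[OF f(2) 0(6)] c by simp
  ultimately have "y = z" using same_parts_eq 0 by blast
  then show ?case using 0 by (simp add: Estar_nz)
next
  case (Suc d)
  have fy: "finite y" using Suc Xv_fin by blast
  have lt: "phi m y < phi m z" using Suc by simp
  note lc = phi_lt_cards[OF Suc(2) Suc(3) lt]
  have "\<exists>w. w \<in> Xv m \<and> adj m y w \<and> phi m w = Suc i \<and> YA m z \<subseteq> YA m w \<and> YB m w \<subseteq> YB m z"
  proof (cases "card y = m")
    case True
    have "card (YB m y) < card (YB m z)" using lc True by simp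
    then have "\<not> YB m z \<subseteq> YB m y" using Suc Xv_fin by (meson card_mono finite_Int not_le)
    then obtain b where b: "b \<in> YB m z" "b \<notin> y" by blast
    define w where "w = insert b y"
    have cw: "card w = m + 1" unfolding w_def using True fy b by simp
    have "w \<subseteq> Sset m" unfolding w_def using Xv_sub[OF Suc(2)] b S_AB by blast
    then have wX: "w \<in> Xv m" using cw by (simp add: Xv_iff)
    have "YB m w = insert b (YB m y)" unfolding w_def using b by blast
    then have wB: "card (YB m w) = card (YB m y) + 1" using fy b by simp
    have pw: "phi m w = Suc i" unfolding phi_def using wB cw True Suc(4) by (simp add: phi_def)
    have "y \<subset> w" unfolding w_def using b by blast
    then have a1: "adj m y w" using Suc(2) wX by (simp add: adj_def)
    have "YA m z \<subseteq> YA m w" unfolding w_def using Suc(6) by blast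
    moreover have "YB m w \<subseteq> YB m z" unfolding w_def using Suc(7) b by blast
    ultimately show ?thesis using wX a1 pw by blast
  next
    case False
    then have cy: "card y = m + 1" using Suc(2) by (simp add: Xv_iff)
    have "card (YA m z) < card (YA m y)" using lc cy by simp
    then have "\<not> YA m y \<subseteq> YA m z" using Suc Xv_fin by (meson card_mono finite_Int not_le)
    then obtain a where a: "a \<in> YA m y" "a \<notin> z" by blast
    define w where "w = y - {a}"
    have cw: "card w = m" unfolding w_def using cy fy a by simp
    have "w \<subseteq> Sset m" unfolding w_def using Xv_sub[OF Suc(2)] by blast
    then have wX: "w \<in> Xv m" using cw by (simp add: Xv_iff)
    have wB: "YB m w = YB m y" unfolding w_def using a AB_disj by blast
    have "card (YB m y) \<ge> 1" using phi_form[OF Suc(2)] cy by auto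
    then have pw: "phi m w = Suc i" using wB cw cy Suc(4) by (simp add: phi_def)
    have "w \<subset> y" unfolding w_def using a by blast
    then have a1: "adj m y w" using Suc(2) wX by (simp add: adj_def)
    have "YA m z \<subseteq> YA m w" unfolding w_def using Suc(6) a by blast
    moreover have "YB m w \<subseteq> YB m z" using wB Suc(7) by simp
    ultimately show ?thesis using wX a1 pw by blast
  qed
  then obtain w where w: "w \<in> Xv m" "adj m y w" "phi m w = Suc i" "YA m z \<subseteq> YA m w" "YB m w \<subseteq> YB m z" by blast
  have "Up m (Suc i) d w z \<noteq> 0" using Suc.IH[OF w(1) Suc(3) w(3) _ w(4) w(5)] Suc(5) by simp
  then show ?case using w Suc(2) Suc(4) by (auto simp: nn_mmult(2) Estar_nz A1_nz)
qed

definition Pm :: "nat \<Rightarrow> nat set \<Rightarrow> nat set \<Rightarrow> mx" where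
  "Pm m y0 z0 = (let i = phi m y0; j = phi m z0;
      k = card (YA m z0) - card (y0 \<inter> z0 \<inter> Aset m);
      l = card (YB m y0) - card (y0 \<inter> z0 \<inter> Bset m)
    in mmult m (mmult m (mpow m (sw m i (nbA i)) k) (mpow m (sw m i (nbB i)) l)) (Up m i (j - i)))"

lemma Pm_Talg: "Pm m y0 z0 \<in> Talg m"
  unfolding Pm_def Let_def by (intro Talg.T_mult mpow_Talg sw_Talg Up_Talg)

lemma nn_Pm: "nn (Pm m y0 z0)" unfolding Pm_def Let_def by simp

lemma IntA: "y \<inter> z \<inter> Aset m = YA m y \<inter> YA m z" by blast
lemma IntB: "y \<inter> z \<inter> Bset m = YB m y \<inter> YB m z" by blast

lemma card_diff_int:
  "finite a \<Longrightarrow> card (a - b) = card a - card (a \<inter> b)"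
  by (simp add: card_Diff_subset_Int)

lemma Pm_rep:
  assumes y0: "y0 \<in> Xv m" and z0: "z0 \<in> Xv m" and le: "phi m y0 \<le> phi m z0"
  shows "Pm m y0 z0 y0 z0 \<noteq> 0"
proof -
  define i where "i = phi m y0"
  define j where "j = phi m z0"
  define p where "p = card (YA m y0)"
  define s where "s = card (YB m y0)"
  define q where "q = card (YA m z0)"
  define t where "t = card (YB m z0)"
  define r where "r = card (YA m y0 \<inter> YA m z0)"
  define \<rho> where "\<rho> = card (YB m y0 \<inter> YB m z0)"
  have fin: "finite (YA m y0)" "finite (YB m y0)" "finite (YA m z0)" "finite (YB m z0)"
    using y0 z0 Xv_fin by blast+
  have pq: "q \<le> p" "s \<le> t" using phi_le_cards[OF y0 z0 le] by (simp_all add: p_def q_def s_def t_def)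
  have rq: "r \<le> q" "r \<le> p" unfolding r_def q_def p_def using fin by (auto intro: card_mono)
  have rs: "\<rho> \<le> s" "\<rho> \<le> t" unfolding \<rho>_def s_def t_def using fin by (auto intro: card_mono)
  have cy0: "card y0 = p + s" using card_split[OF Xv_sub[OF y0]] by (simp add: p_def s_def)
  have "card (YA m y0 - YA m z0) = p - r" using card_diff_int[OF fin(1)] by (simp add: p_def r_def)
  then have "p - q \<le> card (YA m y0 - YA m z0)" using rq by simp
  then obtain T where T: "T \<subseteq> YA m y0 - YA m z0" "card T = p - q" "finite T"
    by (meson obtain_subset_with_card_n)
  define y' where "y' = YA m z0 \<union> T \<union> YB m y0"
  have y'A: "YA m y' = YA m z0 \<union> T" unfolding y'_def using T AB_disj by blast
  have y'B: "YB m y' = YB m y0" unfolding y'_def using T AB_disj by blast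
  have cA': "card (YA m y') = p"
  proof -
    have "YA m z0 \<inter> T = {}" using T by blast
    then have "card (YA m z0 \<union> T) = q + (p - q)" using card_Un_disjoint[OF fin(3) T(3)] T(2) by (simp add: q_def)
    then show ?thesis using y'A pq by simp
  qed
  have y'S: "y' \<subseteq> Sset m" unfolding y'_def using Xv_sub[OF y0] Xv_sub[OF z0] T by blast
  have cy': "card y' = card y0" using card_split[OF y'S] cA' y'B cy0 by (simp add: s_def)
  have y'X: "y' \<in> Xv m" using Xv_same_card[OF y0 y'S cy'] .
  have "YA m y0 - YA m y' = (YA m y0 - YA m z0) - T" using y'A by blast
  then have "card (YA m y0 - YA m y') = (p - r) - (p - q)"
    using card_Diff_subset[OF T(3) T(1)] \<open>card (YA m y0 - YA m z0) = p - r\<close> T(2) by simp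
  then have k: "card (YA m y0 - YA m y') = q - r" using pq rq by simp
  have s1: "mpow m (sw m i (nbA i)) (q - r) y0 y' \<noteq> 0"
    using SA_pow_intro[OF y0 y'X cy'[symmetric] y'B[symmetric] k] by (simp add: i_def)
  have pi': "phi m y' = i" unfolding i_def
    by (rule phi_cardeq[OF y'X y0]) (use cA' y'B in \<open>simp_all add: p_def\<close>)
  have "card (YB m z0 - YB m y0) = t - \<rho>" using card_diff_int[OF fin(4)] by (simp add: t_def \<rho>_def Int_commute)
  then have "s - \<rho> \<le> card (YB m z0 - YB m y0)" using pq by simp
  then obtain T' where T': "T' \<subseteq> YB m z0 - YB m y0" "card T' = s - \<rho>" "finite T'"
    by (meson obtain_subset_with_card_n)
  define y'' where "y'' = YA m y' \<union> (YB m y0 \<inter> YB m z0) \<union> T'"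
  have y''A: "YA m y'' = YA m y'" unfolding y''_def using T' AB_disj by blast
  have y''B: "YB m y'' = (YB m y0 \<inter> YB m z0) \<union> T'" unfolding y''_def using T' AB_disj by blast
  have cB'': "card (YB m y'') = s"
  proof -
    have "(YB m y0 \<inter> YB m z0) \<inter> T' = {}" using T' by blast
    then have "card ((YB m y0 \<inter> YB m z0) \<union> T') = \<rho> + (s - \<rho>)"
      using card_Un_disjoint[of "YB m y0 \<inter> YB m z0" T'] fin T'(2,3) by (simp add: \<rho>_def)
    then show ?thesis using y''B rs by simp
  qed
  have y''S: "y'' \<subseteq> Sset m" unfolding y''_def using y'S Xv_sub[OF y0] Xv_sub[OF z0] T' by blast
  have cy'': "card y'' = card y'" using card_split[OF y''S] card_split[OF y'S] y''A cB'' y'B by (simp add: s_def)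
  have y''X: "y'' \<in> Xv m" using Xv_same_card[OF y'X y''S cy''] .
  have "YB m y' - YB m y'' = YB m y0 - YB m z0" using y'B y''B T' by blast
  then have l: "card (YB m y' - YB m y'') = s - \<rho>"
    using card_diff_int[OF fin(2)] by (simp add: s_def \<rho>_def)
  have s2: "mpow m (sw m i (nbB i)) (s - \<rho>) y' y'' \<noteq> 0"
    using SB_pow_intro[OF y'X y''X cy''[symmetric] y''A[symmetric] l] pi' by simp
  have pi'': "phi m y'' = i" unfolding i_def
    by (rule phi_cardeq[OF y''X y0]) (use cA' y''A cB'' in \<open>simp_all add: p_def s_def\<close>)
  have s3: "Up m i (j - i) y'' z0 \<noteq> 0"
    by (rule Up_intro[OF y''X z0 pi'']) (use le y''A y'A y''B T' in \<open>auto simp: i_def j_def\<close>)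
  have "mmult m (mmult m (mpow m (sw m i (nbA i)) (q - r)) (mpow m (sw m i (nbB i)) (s - \<rho>))) (Up m i (j - i)) y0 z0 \<noteq> 0"
    using s1 s2 s3 y'X y''X by (auto simp: nn_mmult(2))
  then show ?thesis unfolding Pm_def Let_def IntA IntB
    by (simp add: i_def j_def q_def r_def s_def \<rho>_def)
qed

lemma Pm_supp:
  assumes y0: "y0 \<in> Xv m" and z0: "z0 \<in> Xv m" and le: "phi m y0 \<le> phi m z0"
    and nz: "Pm m y0 z0 y z \<noteq> 0"
  shows "y \<in> Xv m \<and> z \<in> Xv m \<and> phi m y = phi m y0 \<and> phi m z = phi m z0 \<and>
         card (y0 \<inter> z0 \<inter> Aset m) \<le> card (y \<inter> z \<inter> Aset m) \<and> card (y0 \<inter> z0 \<inter> Bset m) \<le> card (y \<inter> z \<inter> Bset m)"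
proof -
  define i where "i = phi m y0"
  define j where "j = phi m z0"
  define p where "p = card (YA m y0)"
  define s where "s = card (YB m y0)"
  define q where "q = card (YA m z0)"
  define t where "t = card (YB m z0)"
  define r where "r = card (YA m y0 \<inter> YA m z0)"
  define \<rho> where "\<rho> = card (YB m y0 \<inter> YB m z0)"
  have fin: "finite (YA m y0)" "finite (YB m y0)" "finite (YA m z0)" "finite (YB m z0)"
    using y0 z0 Xv_fin by blast+
  have pq: "q \<le> p" "s \<le> t" using phi_le_cards[OF y0 z0 le] by (simp_all add: p_def q_def s_def t_def)
  have rq: "r \<le> q" "r \<le> p" unfolding r_def q_def p_def using fin by (auto intro: card_mono)
  have rs: "\<rho> \<le> s" "\<rho> \<le> t" unfolding \<rho>_def s_def t_def using fin by (auto intro: card_mono)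
  have "mmult m (mmult m (mpow m (sw m i (nbA i)) (q - r)) (mpow m (sw m i (nbB i)) (s - \<rho>))) (Up m i (j - i)) y z \<noteq> 0"
    using nz unfolding Pm_def Let_def IntA IntB by (simp add: i_def j_def q_def r_def s_def \<rho>_def)
  then obtain y' y'' where
    h1: "mpow m (sw m i (nbA i)) (q - r) y y' \<noteq> 0" and
    h2: "mpow m (sw m i (nbB i)) (s - \<rho>) y' y'' \<noteq> 0" and
    h3: "Up m i (j - i) y'' z \<noteq> 0"
    by (auto simp: nn_mmult(2))
  note d1 = SA_pow_dest[OF h1] and d2 = SB_pow_dest[OF h2] and d3 = Up_dest[OF h3]
  have yX: "y \<in> Xv m" and zX: "z \<in> Xv m" using d1 d3 by blast+
  have fy: "finite (YA m y)" "finite (YB m y)" "finite (YA m y'')" "finite (YB m y'')" "finite (YB m y')"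
    using d1 d2 Xv_fin by blast+
  have cA: "card (YA m y) = card (YA m y'')"
    using card_split[OF Xv_sub[OF yX]] card_split[OF Xv_sub[of y' m]] d1 d2 by simp
  have cB: "card (YB m y) = card (YB m y'')"
    using card_split[OF Xv_sub[of y' m]] card_split[OF Xv_sub[of y'' m]] d1 d2 by simp
  have py: "phi m y = i" using phi_cardeq[OF yX _ cA cB] d2 d3 by simp
  have pz: "phi m z = j" using d3 le by (simp add: i_def j_def)
  have cy: "card (YA m y) = p" "card (YB m y) = s" using phi_eq_cards[OF yX y0] py by (simp_all add: i_def p_def s_def)
  have cz: "card (YA m z) = q" "card (YB m z) = t" using phi_eq_cards[OF zX z0] pz by (simp_all add: j_def q_def t_def)
  have A1: "card (YA m y - YA m z) \<le> card (YA m y - YA m y'') + card (YA m y'' - YA m z)"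
    using fy by (intro card_diff_tri)
  have A2: "card (YA m y'' - YA m z) = p - q"
    using card_Diff_subset[of "YA m z" "YA m y''"] d3 cz cA cy zX Xv_fin by simp
  have A3: "card (YA m y - YA m y'') \<le> q - r" using d1 d2 by simp
  have "card (YA m y - YA m z) \<le> p - r" using A1 A2 A3 pq rq by linarith
  then have "r \<le> card (YA m y \<inter> YA m z)" using card_diff_int[OF fy(1), of "YA m z"] cy rq by linarith
  moreover
  have B1: "card (YB m y - YB m z) \<le> card (YB m y - YB m y'') + card (YB m y'' - YB m z)"
    using fy by (intro card_diff_tri)
  have B2: "YB m y'' - YB m z = {}" using d3 by blast
  have B3: "card (YB m y - YB m y'') \<le> s - \<rho>" using d1 d2 by simp
  have "card (YB m y - YB m z) \<le> s - \<rho>" using B1 B2 B3 by simp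
  then have "\<rho> \<le> card (YB m y \<inter> YB m z)" using card_diff_int[OF fy(2), of "YB m z"] cy rs by linarith
  ultimately show ?thesis unfolding IntA IntB using yX zX py pz
    by (simp add: i_def j_def r_def \<rho>_def)
qed

definition rs :: "nat \<times> nat \<times> nat \<times> nat \<times> nat \<times> nat \<Rightarrow> nat" where
  "rs \<beta> = fst (snd (snd (snd (snd \<beta>)))) + snd (snd (snd (snd (snd \<beta>))))"

lemma cls_rs: "rs (cls m y z) = card (y \<inter> z \<inter> Aset m) + card (y \<inter> z \<inter> Bset m)"
  by (simp add: rs_def cls_def)

lemma rs_bound: "y \<in> Xv m \<Longrightarrow> rs (cls m y z) \<le> 2*m+1"
proof -
  assume y: "y \<in> Xv m"
  have "card (y \<inter> z \<inter> Aset m) \<le> card (Aset m)" by (rule card_mono) auto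
  moreover have "card (y \<inter> z \<inter> Bset m) \<le> card (Bset m)" by (rule card_mono) auto
  ultimately show ?thesis unfolding cls_rs by simp
qed

lemma mscale_inv: "c \<noteq> 0 \<Longrightarrow> mscale (1 / c) (mscale c M) = M"
  by (simp add: mscale_def fun_eq_iff)

lemma gen_up:
  "\<alpha> \<in> Cls m \<Longrightarrow> phi m (fst (rep m \<alpha>)) \<le> phi m (snd (rep m \<alpha>)) \<Longrightarrow> Ind m \<alpha> \<in> Talg m"
proof (induction "4*m+4 - rs \<alpha>" arbitrary: \<alpha> rule: less_induct)
  case less
  define y0 where "y0 = fst (rep m \<alpha>)"
  define z0 where "z0 = snd (rep m \<alpha>)"
  have r0: "y0 \<in> Xv m" "z0 \<in> Xv m" "cls m y0 z0 = \<alpha>" using rep_prop[OF less(2)] by (simp_all add: y0_def z0_def)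
  have le: "phi m y0 \<le> phi m z0" using less(3) by (simp add: y0_def z0_def)
  define P where "P = Pm m y0 z0"
  define c where "c = (\<lambda>\<beta>. P (fst (rep m \<beta>)) (snd (rep m \<beta>)))"
  have PT: "P \<in> Talg m" unfolding P_def by (rule Pm_Talg)
  have dec: "P = (\<Sum>\<beta>\<in>Cls m. mscale (c \<beta>) (Ind m \<beta>))" unfolding c_def by (rule decomp[OF PT])
  have ca: "c \<alpha> \<noteq> 0" unfolding c_def P_def using Pm_rep[OF r0(1,2) le] by (simp add: y0_def z0_def)
  have R: "(\<Sum>\<beta>\<in>Cls m - {\<alpha>}. mscale (c \<beta>) (Ind m \<beta>)) \<in> Talg m"
  proof (rule Talg_sum)
    show "finite (Cls m - {\<alpha>})" by simp
  next
    fix \<beta> assume b: "\<beta> \<in> Cls m - {\<alpha>}"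
    show "mscale (c \<beta>) (Ind m \<beta>) \<in> Talg m"
    proof (cases "c \<beta> = 0")
      case True
      have "mscale (c \<beta>) (Ind m \<beta>) = 0" using True by (simp add: mscale_def fun_eq_iff)
      then show ?thesis using zero_Talg by simp
    next
      case False
      define y1 where "y1 = fst (rep m \<beta>)"
      define z1 where "z1 = snd (rep m \<beta>)"
      have r1: "y1 \<in> Xv m" "z1 \<in> Xv m" "cls m y1 z1 = \<beta>" using rep_prop[of \<beta> m] b by (simp_all add: y1_def z1_def)
      have "Pm m y0 z0 y1 z1 \<noteq> 0" using False by (simp add: c_def P_def y1_def z1_def)
      note sp = Pm_supp[OF r0(1,2) le this]
      have e1: "card (YA m y1) = card (YA m y0) \<and> card (YB m y1) = card (YB m y0)"
        using phi_eq_cards[OF r1(1) r0(1)] sp by simp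
      have e2: "card (YA m z1) = card (YA m z0) \<and> card (YB m z1) = card (YB m z0)"
        using phi_eq_cards[OF r1(2) r0(2)] sp by simp
      have "\<beta> \<noteq> \<alpha>" using b by blast
      then have "rs \<beta> \<noteq> rs \<alpha>"
        using r0(3) r1(3) e1 e2 sp unfolding cls_def rs_def by auto
      moreover have "rs \<alpha> = card (y0 \<inter> z0 \<inter> Aset m) + card (y0 \<inter> z0 \<inter> Bset m)"
        using cls_rs[of m y0 z0] r0(3) by simp
      moreover have "rs \<beta> = card (y1 \<inter> z1 \<inter> Aset m) + card (y1 \<inter> z1 \<inter> Bset m)"
        using cls_rs[of m y1 z1] r1(3) by simp
      moreover have "card (y0 \<inter> z0 \<inter> Aset m) \<le> card (y1 \<inter> z1 \<inter> Aset m)"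
        "card (y0 \<inter> z0 \<inter> Bset m) \<le> card (y1 \<inter> z1 \<inter> Bset m)" using sp by simp_all
      ultimately have lt: "rs \<alpha> < rs \<beta>" by linarith
      have "rs \<beta> \<le> 2*m+1" using rs_bound[OF r1(1), of z1] r1(3) by simp
      then have m1: "4*m+4 - rs \<beta> < 4*m+4 - rs \<alpha>" using lt by linarith
      have m2: "phi m (fst (rep m \<beta>)) \<le> phi m (snd (rep m \<beta>))"
        using sp le by (simp add: y1_def[symmetric] z1_def[symmetric])
      have m3: "\<beta> \<in> Cls m" using b by simp
      have "Ind m \<beta> \<in> Talg m" by (rule less.hyps[OF m1 m3 m2])
      then show ?thesis by (rule Talg.T_scale)
    qed
  qed
  have "P = mscale (c \<alpha>) (Ind m \<alpha>) + (\<Sum>\<beta>\<in>Cls m - {\<alpha>}. mscale (c \<beta>) (Ind m \<beta>))"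
    using dec sum.remove[OF finite_Cls less(2)] by simp
  then have eq: "mscale (c \<alpha>) (Ind m \<alpha>) = P - (\<Sum>\<beta>\<in>Cls m - {\<alpha>}. mscale (c \<beta>) (Ind m \<beta>))"
    by (simp add: algebra_simps)
  have "mscale (1 / c \<alpha>) (mscale (c \<alpha>) (Ind m \<alpha>)) = Ind m \<alpha>" by (rule mscale_inv[OF ca])
  then have "Ind m \<alpha> = mscale (1 / c \<alpha>) (P - (\<Sum>\<beta>\<in>Cls m - {\<alpha>}. mscale (c \<beta>) (Ind m \<beta>)))"
    unfolding eq by simp
  then show ?case using Talg.T_scale[OF Talg_diff[OF PT R]] by simp
qed

lemma cls_swap: "cls m z y = (case cls m y z of (a,b,c,d,e,f) \<Rightarrow> (c,d,a,b,e,f))"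
  by (simp add: cls_def Int_commute Int_left_commute)

lemma Ind_gen: "\<alpha> \<in> Cls m \<Longrightarrow> Ind m \<alpha> \<in> Talg m"
proof -
  assume a: "\<alpha> \<in> Cls m"
  define y0 where "y0 = fst (rep m \<alpha>)"
  define z0 where "z0 = snd (rep m \<alpha>)"
  have r0: "y0 \<in> Xv m" "z0 \<in> Xv m" "cls m y0 z0 = \<alpha>" using rep_prop[OF a] by (simp_all add: y0_def z0_def)
  show ?thesis
  proof (cases "phi m y0 \<le> phi m z0")
    case True then show ?thesis using gen_up[OF a] by (simp add: y0_def z0_def)
  next
    case False
    define \<alpha>' where "\<alpha>' = cls m z0 y0"
    have a': "\<alpha>' \<in> Cls m" unfolding \<alpha>'_def using cls_in r0 by blast
    define y1 where "y1 = fst (rep m \<alpha>')"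
    define z1 where "z1 = snd (rep m \<alpha>')"
    have r1: "y1 \<in> Xv m" "z1 \<in> Xv m" "cls m y1 z1 = \<alpha>'" using rep_prop[OF a'] by (simp_all add: y1_def z1_def)
    have "card (YA m y1) = card (YA m z0)" "card (YB m y1) = card (YB m z0)"
      "card (YA m z1) = card (YA m y0)" "card (YB m z1) = card (YB m y0)"
      using r1(3) unfolding \<alpha>'_def cls_def by simp_all
    then have "phi m y1 = phi m z0" "phi m z1 = phi m y0"
      using phi_cardeq[OF r1(1) r0(2)] phi_cardeq[OF r1(2) r0(1)] by simp_all
    then have "phi m y1 \<le> phi m z1" using False by simp
    then have I: "Ind m \<alpha>' \<in> Talg m" using gen_up[OF a'] by (simp add: y1_def z1_def)
    have "mtransp (Ind m \<alpha>') = Ind m \<alpha>"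
    proof (intro ext)
      fix y z
      have "cls m z y = \<alpha>' \<longleftrightarrow> cls m y z = \<alpha>"
        unfolding \<alpha>'_def r0(3)[symmetric] using cls_swap[of m z y] cls_swap[of m z0 y0]
        by (auto simp: cls_def Int_commute Int_left_commute)
      then show "mtransp (Ind m \<alpha>') y z = Ind m \<alpha> y z" by (auto simp: mtransp_def Ind_def)
    qed
    then show ?thesis using Talg_transp[OF I] by simp
  qed
qed

theorem dim_Cls: "vector_space.dim mscale (Talg m) = card (Cls m)"
  by (rule dim_eq[OF Ind_gen])

definition Tn :: "nat \<Rightarrow> (nat \<times> nat \<times> nat) set" where
  "Tn n = {(s,t,h). h \<le> s \<and> h \<le> t \<and> h + s \<le> n \<and> h + t \<le> n}"

definition Qm :: "nat \<Rightarrow> (nat \<times> nat \<times> nat \<times> nat) set" where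
  "Qm m = {(s,t,j,h). j \<le> s \<and> j \<le> t \<and> j + s \<le> m \<and> j + t \<le> m \<and> h \<le> s \<and> h \<le> t \<and> h + s \<le> m+1 \<and> h + t \<le> m+1}"

lemma Tn_fin: "finite (Tn n)"
proof -
  have "Tn n \<subseteq> {..n} \<times> {..n} \<times> {..n}" by (auto simp: Tn_def)
  then show ?thesis by (rule finite_subset) auto
qed

lemma Qm_fin: "finite (Qm m)"
proof -
  have "Qm m \<subseteq> {..m+1} \<times> {..m+1} \<times> {..m+1} \<times> {..m+1}" by (auto simp: Qm_def)
  then show ?thesis by (rule finite_subset) auto
qed

lemma Tn_step: "card (Tn (n+2)) = (n+3)^2 + card (Tn n)"
proof -
  define D0 where "D0 = (\<lambda>(s,t). (s,t,0::nat)) ` ({..n+2} \<times> {..n+2})"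
  define D1 where "D1 = (\<lambda>(s,t,h). (Suc s, Suc t, Suc h)) ` Tn n"
  have eq: "Tn (n+2) = D0 \<union> D1"
  proof
    show "Tn (n+2) \<subseteq> D0 \<union> D1"
    proof
      fix x assume x: "x \<in> Tn (n+2)"
      obtain s t h where xe: "x = (s,t,h)" by (cases x) auto
      show "x \<in> D0 \<union> D1"
      proof (cases "h = 0")
        case True then show ?thesis using x xe by (auto simp: D0_def Tn_def)
      next
        case False
        then have "(s-1,t-1,h-1) \<in> Tn n" "x = (\<lambda>(s,t,h). (Suc s, Suc t, Suc h)) (s-1,t-1,h-1)"
          using x xe by (auto simp: Tn_def)
        then show ?thesis unfolding D1_def by blast
      qed
    qed
  next
    show "D0 \<union> D1 \<subseteq> Tn (n+2)" by (auto simp: D0_def D1_def Tn_def)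
  qed
  have dis: "D0 \<inter> D1 = {}" by (auto simp: D0_def D1_def)
  have c0: "card D0 = (n+3)^2" unfolding D0_def
    by (subst card_image) (auto simp: inj_on_def power2_eq_square algebra_simps)
  have c1: "card D1 = card (Tn n)" unfolding D1_def
    by (rule card_image) (auto simp: inj_on_def)
  have "finite D0" "finite D1" unfolding D0_def D1_def using Tn_fin by auto
  then show ?thesis using eq dis c0 c1 card_Un_disjoint by metis
qed

lemma Tn_0: "card (Tn 0) = 1"
proof -
  have "Tn 0 = {(0,0,0)}" by (auto simp: Tn_def)
  then show ?thesis by simp
qed

lemma Tn_1: "card (Tn 1) = 4"
proof -
  have "Tn 1 = {(0,0,0),(0,1,0),(1,0,0),(1,1,0)}" by (auto simp: Tn_def)
  then show ?thesis by simp
qed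

lemma Tn_pair: "6 * (card (Tn n) + card (Tn (n+1))) = (n+2)*(n+3)*(2*n+5)"
proof (induction n rule: nat_less_induct)
  case (1 n)
  show ?case
  proof (cases "n < 2")
    case True
    then have "n = 0 \<or> n = 1" by auto
    then show ?thesis
    proof
      assume "n = 0" then show ?thesis using Tn_0 Tn_1 by simp
    next
      assume n1: "n = 1"
      have "card (Tn 2) = 10" using Tn_step[of 0] Tn_0 by (simp add: power2_eq_square numeral_2_eq_2)
      then show ?thesis using n1 Tn_1 by (simp add: numeral_2_eq_2)
    qed
  next
    case False
    then obtain k where k: "n = k + 2" by (metis add.commute le_Suc_ex not_less)
    have ih: "6 * (card (Tn k) + card (Tn (k+1))) = (k+2)*(k+3)*(2*k+5)" using 1 k by simp
    have "card (Tn n) = (k+3)^2 + card (Tn k)" using Tn_step[of k] k by simp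
    moreover have "card (Tn (n+1)) = (k+4)^2 + card (Tn (k+1))" using Tn_step[of "k+1"] k by (simp add: add.assoc)
    ultimately show ?thesis using ih k by (simp add: power2_eq_square algebra_simps)
  qed
qed

lemma Qm_step: "card (Qm (m+2)) = (m+3)^2 + card (Tn (m+1)) + card (Tn m) + card (Qm m)"
proof -
  define D0 where "D0 = (\<lambda>(s,t). (s,t,0::nat,0::nat)) ` ({..m+2} \<times> {..m+2})"
  define D1 where "D1 = (\<lambda>(s,t,h). (Suc s, Suc t, 0::nat, Suc h)) ` Tn (m+1)"
  define D2 where "D2 = (\<lambda>(s,t,j). (Suc s, Suc t, Suc j, 0::nat)) ` Tn m"
  define D3 where "D3 = (\<lambda>(s,t,j,h). (Suc s, Suc t, Suc j, Suc h)) ` Qm m"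
  have eq: "Qm (m+2) = D0 \<union> D1 \<union> D2 \<union> D3"
  proof
    show "Qm (m+2) \<subseteq> D0 \<union> D1 \<union> D2 \<union> D3"
    proof
      fix x assume x: "x \<in> Qm (m+2)"
      obtain s t j h where xe: "x = (s,t,j,h)" by (cases x) auto
      show "x \<in> D0 \<union> D1 \<union> D2 \<union> D3"
      proof (cases "j = 0")
        case True
        show ?thesis
        proof (cases "h = 0")
          case True then show ?thesis using x xe \<open>j = 0\<close> by (auto simp: D0_def Qm_def)
        next
          case False
          then have "(s-1,t-1,h-1) \<in> Tn (m+1)" "x = (\<lambda>(s,t,h). (Suc s, Suc t, 0::nat, Suc h)) (s-1,t-1,h-1)"
            using x xe \<open>j = 0\<close> by (auto simp: Tn_def Qm_def)
          then show ?thesis unfolding D1_def by blast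
        qed
      next
        case False
        show ?thesis
        proof (cases "h = 0")
          case True
          then have "(s-1,t-1,j-1) \<in> Tn m" "x = (\<lambda>(s,t,j). (Suc s, Suc t, Suc j, 0::nat)) (s-1,t-1,j-1)"
            using x xe \<open>j \<noteq> 0\<close> by (auto simp: Tn_def Qm_def)
          then show ?thesis unfolding D2_def by blast
        next
          case False
          then have "(s-1,t-1,j-1,h-1) \<in> Qm m" "x = (\<lambda>(s,t,j,h). (Suc s, Suc t, Suc j, Suc h)) (s-1,t-1,j-1,h-1)"
            using x xe \<open>j \<noteq> 0\<close> by (auto simp: Qm_def)
          then show ?thesis unfolding D3_def by blast
        qed
      qed
    qed
  next
    show "D0 \<union> D1 \<union> D2 \<union> D3 \<subseteq> Qm (m+2)" by (auto simp: D0_def D1_def D2_def D3_def Tn_def Qm_def)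
  qed
  have f: "finite D0" "finite D1" "finite D2" "finite D3" unfolding D0_def D1_def D2_def D3_def
    using Tn_fin Qm_fin by auto
  have c0: "card D0 = (m+3)^2" unfolding D0_def
    by (subst card_image) (auto simp: inj_on_def power2_eq_square algebra_simps)
  have c1: "card D1 = card (Tn (m+1))" unfolding D1_def by (rule card_image) (auto simp: inj_on_def)
  have c2: "card D2 = card (Tn m)" unfolding D2_def by (rule card_image) (auto simp: inj_on_def)
  have c3: "card D3 = card (Qm m)" unfolding D3_def by (rule card_image) (auto simp: inj_on_def)
  have "card (D0 \<union> D1 \<union> D2 \<union> D3) = card D0 + card D1 + card D2 + card D3"
  proof -
    have d1: "D0 \<inter> D1 = {}" by (auto simp: D0_def D1_def)
    have d2: "(D0 \<union> D1) \<inter> D2 = {}" by (auto simp: D0_def D1_def D2_def)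
    have d3: "(D0 \<union> D1 \<union> D2) \<inter> D3 = {}" by (auto simp: D0_def D1_def D2_def D3_def)
    show ?thesis using f d1 d2 d3 by (simp add: card_Un_disjoint)
  qed
  then show ?thesis using eq c0 c1 c2 c3 by simp
qed

lemma Qm_formula: "24 * card (Qm m) = (m+1)*(m+2)*(m+3)*(m+4)"
proof (induction m rule: nat_less_induct)
  case (1 m)
  show ?case
  proof (cases "m < 2")
    case True
    then have "m = 0 \<or> m = 1" by auto
    then show ?thesis
    proof
      assume m0: "m = 0"
      have "Qm 0 = {(0,0,0,0)}" by (auto simp: Qm_def)
      then show ?thesis using m0 by simp
    next
      assume m1: "m = 1"
      have "Qm 1 = {(0,0,0,0),(0,1,0,0),(1,0,0,0),(1,1,0,0),(1,1,0,1)}"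
      proof
        show "Qm 1 \<subseteq> {(0,0,0,0),(0,1,0,0),(1,0,0,0),(1,1,0,0),(1,1,0,1)}"
        proof
          fix x assume x: "x \<in> Qm 1"
          obtain s t j h where xe: "x = (s,t,j,h)" by (cases x) auto
          have c: "j + s \<le> 1" "j + t \<le> 1" "h \<le> s" "h \<le> t" "j \<le> s" using x xe by (auto simp: Qm_def)
          have j0: "j = 0" using c by linarith
          have "s \<le> 1" "t \<le> 1" using c by simp_all
          then have "s \<in> {0,1}" "t \<in> {0,1}" by auto
          then show "x \<in> {(0,0,0,0),(0,1,0,0),(1,0,0,0),(1,1,0,0),(1,1,0,1)}"
            using c xe j0 by (auto simp: le_Suc_eq)
        qed
      next
        show "{(0,0,0,0),(0,1,0,0),(1,0,0,0),(1,1,0,0),(1,1,0,1)} \<subseteq> Qm 1" by (simp add: Qm_def)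
      qed
      then show ?thesis using m1 by simp
    qed
  next
    case False
    then obtain k where k: "m = k + 2" by (metis add.commute le_Suc_ex not_less)
    have ih: "24 * card (Qm k) = (k+1)*(k+2)*(k+3)*(k+4)" using 1 k by simp
    have tp: "6 * (card (Tn k) + card (Tn (k+1))) = (k+2)*(k+3)*(2*k+5)" by (rule Tn_pair)
    have "card (Qm m) = (k+3)^2 + card (Tn (k+1)) + card (Tn k) + card (Qm k)" using Qm_step[of k] k by simp
    then have "24 * card (Qm m) = 24*(k+3)^2 + 4 * (6 * (card (Tn k) + card (Tn (k+1)))) + 24 * card (Qm k)"
      by simp
    also have "\<dots> = 24*(k+3)^2 + 4 * ((k+2)*(k+3)*(2*k+5)) + (k+1)*(k+2)*(k+3)*(k+4)" using tp ih by simp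
    also have "\<dots> = (m+1)*(m+2)*(m+3)*(m+4)" using k by (simp add: power2_eq_square algebra_simps)
    finally show ?thesis .
  qed
qed

lemma Qm_binom: "card (Qm m) = (m+4) choose 4"
proof -
  have "fact 4 * fact m * ((m+4) choose 4) = (fact (m+4) :: nat)"
    using binomial_fact_lemma[of 4 "m+4"] by simp
  moreover have "fact (m+4) = (m+4) * (m+3) * (m+2) * (m+1) * (fact m :: nat)"
    by (simp add: fact_Suc numeral_eq_Suc algebra_simps)
  moreover have "(fact 4 :: nat) = 24" by (simp add: fact_numeral)
  ultimately have "fact m * (24 * ((m+4) choose 4)) = fact m * ((m+1)*(m+2)*(m+3)*(m+4))"
    by (simp add: algebra_simps)
  then have "24 * ((m+4) choose 4) = (m+1)*(m+2)*(m+3)*(m+4)" using fact_nonzero[of m] by (metis mult_left_cancel)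
  then show ?thesis using Qm_formula[of m] by simp
qed

lemma Apart:
  fixes r p q n :: nat
  assumes "r \<le> p" "r \<le> q" "p+q \<le> n+r" "p \<le> n" "q \<le> n"
  shows "r - (p+q-n) \<le> p \<and> r - (p+q-n) \<le> q \<and> r - (p+q-n) + p \<le> n \<and> r - (p+q-n) + q \<le> n \<and>
        r - (p+q-n) + (p+q-n) = r"
  using assms by arith

lemma Apart':
  fixes j p q n :: nat
  assumes "j \<le> p" "j \<le> q" "j + p \<le> n" "j + q \<le> n"
  shows "j + (p+q-n) \<le> p \<and> j + (p+q-n) \<le> q \<and> p + q \<le> n + (j + (p+q-n)) \<and> j + (p+q-n) - (p+q-n) = j"
  using assms by arith

definition Vt :: "nat \<Rightarrow> (nat \<times> nat \<times> nat \<times> nat \<times> nat \<times> nat) set" where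
  "Vt m = {(p,s,q,t,r,\<rho>). p \<le> m \<and> q \<le> m \<and> (p+s = m \<or> p+s = m+1) \<and> (q+t = m \<or> q+t = m+1) \<and>
      r \<le> p \<and> r \<le> q \<and> p+q \<le> m+r \<and> \<rho> \<le> s \<and> \<rho> \<le> t \<and> s+t \<le> m+1+\<rho>}"

definition psi :: "nat \<Rightarrow> nat \<times> nat \<times> nat \<times> nat \<times> nat \<times> nat \<Rightarrow> nat \<times> nat \<times> nat \<times> nat \<times> nat \<times> nat" where
  "psi m x = (case x of (e,e',s',t',j,h) \<Rightarrow>
     let p = (if e = 0 then m - s' else s'); s = (if e = 0 then s' else m+1-s');
         q = (if e' = 0 then m - t' else t'); t = (if e' = 0 then t' else m+1-t')
     in (p, s, q, t, j + (p+q-m), h + (s+t-(m+1))))"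

definition phiv :: "nat \<Rightarrow> nat \<times> nat \<times> nat \<times> nat \<times> nat \<times> nat \<Rightarrow> nat \<times> nat \<times> nat \<times> nat \<times> nat \<times> nat" where
  "phiv m v = (case v of (p,s,q,t,r,\<rho>) \<Rightarrow>
     (p+s-m, q+t-m, (if p+s = m then s else p), (if q+t = m then t else q), r - (p+q-m), \<rho> - (s+t-(m+1))))"

definition Dm :: "nat \<Rightarrow> (nat \<times> nat \<times> nat \<times> nat \<times> nat \<times> nat) set" where
  "Dm m = {0,1} \<times> {0,1} \<times> Qm m"

lemma psi_in: "x \<in> Dm m \<Longrightarrow> psi m x \<in> Vt m"
proof -
  assume x: "x \<in> Dm m"
  obtain e e' s' t' j h where xe: "x = (e,e',s',t',j,h)" by (cases x) auto
  have h: "e = 0 \<or> e = 1" "e' = 0 \<or> e' = 1" "j \<le> s'" "j \<le> t'" "j + s' \<le> m" "j + t' \<le> m"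
    "h \<le> s'" "h \<le> t'" "h + s' \<le> m+1" "h + t' \<le> m+1"
    using x xe by (auto simp: Dm_def Qm_def)
  from h(1,2) show ?thesis
  proof (elim disjE)
    assume "e = 0" "e' = 0" then show ?thesis unfolding xe psi_def Let_def Vt_def using h(3-) by simp arith
  next
    assume "e = 0" "e' = 1" then show ?thesis unfolding xe psi_def Let_def Vt_def using h(3-) by simp arith
  next
    assume "e = 1" "e' = 0" then show ?thesis unfolding xe psi_def Let_def Vt_def using h(3-) by simp arith
  next
    assume "e = 1" "e' = 1" then show ?thesis unfolding xe psi_def Let_def Vt_def using h(3-) by simp arith
  qed
qed


lemma phiv_in: "v \<in> Vt m \<Longrightarrow> phiv m v \<in> Dm m \<and> psi m (phiv m v) = v"
proof -
  assume v: "v \<in> Vt m"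
  obtain p s q t r \<rho> where ve: "v = (p,s,q,t,r,\<rho>)" by (cases v) auto
  have h: "p+s = m \<or> p+s = m+1" "q+t = m \<or> q+t = m+1" "p \<le> m" "q \<le> m"
      "r \<le> p" "r \<le> q" "p+q \<le> m+r" "\<rho> \<le> s" "\<rho> \<le> t" "s+t \<le> m+1+\<rho>"
    using v ve by (auto simp: Vt_def)
  define jA where "jA = r - (p+q-m)"
  define jB where "jB = \<rho> - (s+t-(m+1))"
  have sl: "s \<le> m+1" "t \<le> m+1" using h(1,2) by auto
  have A: "jA \<le> p \<and> jA \<le> q \<and> jA + p \<le> m \<and> jA + q \<le> m \<and> jA + (p+q-m) = r"
    unfolding jA_def by (rule Apart[OF h(5,6,7,3,4)])
  have B: "jB \<le> s \<and> jB \<le> t \<and> jB + s \<le> m+1 \<and> jB + t \<le> m+1 \<and> jB + (s+t-(m+1)) = \<rho>"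
    unfolding jB_def by (rule Apart[OF h(8,9) _ sl]) (use h(10) in simp)
  from h(1,2) show ?thesis
  proof (elim disjE)
    assume c: "p+s = m" "q+t = m"
    have e: "phiv m v = (0,0,s,t,jA,jB)" using c by (simp add: ve phiv_def jA_def jB_def)
    have "(s,t,jA,jB) \<in> Qm m" using A B c by (simp add: Qm_def)
    moreover have "psi m (0,0,s,t,jA,jB) = v"
    proof -
      have "m - s = p" "m - t = q" using c by auto
      then show ?thesis using A B by (simp add: psi_def ve)
    qed
    ultimately show ?thesis using e by (simp add: Dm_def)
  next
    assume c: "p+s = m" "q+t = m+1"
    have e: "phiv m v = (0,1,s,q,jA,jB)" using c by (simp add: ve phiv_def jA_def jB_def)
    have "(s,q,jA,jB) \<in> Qm m" using A B c by (simp add: Qm_def)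
    moreover have "psi m (0,1,s,q,jA,jB) = v"
    proof -
      have "m - s = p" "m + 1 - q = t" using c by auto
      then show ?thesis using A B by (simp add: psi_def ve)
    qed
    ultimately show ?thesis using e by (simp add: Dm_def)
  next
    assume c: "p+s = m+1" "q+t = m"
    have e: "phiv m v = (1,0,p,t,jA,jB)" using c by (simp add: ve phiv_def jA_def jB_def)
    have "(p,t,jA,jB) \<in> Qm m" using A B c by (simp add: Qm_def)
    moreover have "psi m (1,0,p,t,jA,jB) = v"
    proof -
      have "m + 1 - p = s" "m - t = q" using c by auto
      then show ?thesis using A B by (simp add: psi_def ve)
    qed
    ultimately show ?thesis using e by (simp add: Dm_def)
  next
    assume c: "p+s = m+1" "q+t = m+1"
    have e: "phiv m v = (1,1,p,q,jA,jB)" using c by (simp add: ve phiv_def jA_def jB_def)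
    have "(p,q,jA,jB) \<in> Qm m" using A B c by (simp add: Qm_def)
    moreover have "psi m (1,1,p,q,jA,jB) = v"
    proof -
      have "m + 1 - p = s" "m + 1 - q = t" using c by auto
      then show ?thesis using A B by (simp add: psi_def ve)
    qed
    ultimately show ?thesis using e by (simp add: Dm_def)
  qed
qed

lemma phiv_psi: "x \<in> Dm m \<Longrightarrow> phiv m (psi m x) = x"
proof -
  assume x: "x \<in> Dm m"
  obtain e e' s' t' j h where xe: "x = (e,e',s',t',j,h)" by (cases x) auto
  have h: "e = 0 \<or> e = 1" "e' = 0 \<or> e' = 1" "j \<le> s'" "j \<le> t'" "j + s' \<le> m" "j + t' \<le> m"
    "h \<le> s'" "h \<le> t'" "h + s' \<le> m+1" "h + t' \<le> m+1"
    using x xe by (auto simp: Dm_def Qm_def)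
  have B: "h + (s'+t'-(m+1)) - (s'+t'-(m+1)) = h" by simp
  from h(1,2) show ?thesis
  proof (elim disjE)
    assume c: "e = 0" "e' = 0"
    have A: "j + ((m-s')+(m-t')-m) - ((m-s')+(m-t')-m) = j" by simp
    show ?thesis using c h A B by (simp add: xe psi_def phiv_def)
  next
    assume c: "e = 0" "e' = 1"
    have A: "j + ((m-s')+t'-m) - ((m-s')+t'-m) = j" by simp
    show ?thesis using c h A by (simp add: xe psi_def phiv_def)
  next
    assume c: "e = 1" "e' = 0"
    have A: "j + (s'+(m-t')-m) - (s'+(m-t')-m) = j" by simp
    show ?thesis using c h A by (simp add: xe psi_def phiv_def)
  next
    assume c: "e = 1" "e' = 1"
    show ?thesis using c h by (simp add: xe psi_def phiv_def)
  qed
qed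

lemma Vt_card: "card (Vt m) = 4 * card (Qm m)"
proof -
  have inj: "inj_on (psi m) (Dm m)"
  proof (rule inj_onI)
    fix x x' assume "x \<in> Dm m" "x' \<in> Dm m" "psi m x = psi m x'"
    then show "x = x'" using phiv_psi by metis
  qed
  have "psi m ` Dm m = Vt m"
  proof
    show "psi m ` Dm m \<subseteq> Vt m" using psi_in by blast
  next
    show "Vt m \<subseteq> psi m ` Dm m"
    proof
      fix v assume "v \<in> Vt m"
      then have "phiv m v \<in> Dm m" "psi m (phiv m v) = v" using phiv_in by blast+
      then show "v \<in> psi m ` Dm m" by (metis image_eqI)
    qed
  qed
  then have "card (Vt m) = card (Dm m)" using card_image[OF inj] by simp
  also have "\<dots> = 4 * card (Qm m)" unfolding Dm_def using Qm_fin by (simp add: card_cartesian_product)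
  finally show ?thesis .
qed

lemma interval_sets:
  fixes a b c n off :: nat
  assumes "c \<le> a" "c \<le> b" "a + b \<le> n + c"
  shows "\<exists>u v. u \<subseteq> {off..<off+n} \<and> v \<subseteq> {off..<off+n} \<and> card u = a \<and> card v = b \<and> card (u \<inter> v) = c"
proof -
  define u where "u = {off..<off+a}"
  define v where "v = {off+a-c..<off+a-c+b}"
  have "u \<inter> v = {off+a-c..<off+a}" unfolding u_def v_def using assms by auto
  moreover have "u \<subseteq> {off..<off+n}" "v \<subseteq> {off..<off+n}" unfolding u_def v_def using assms by auto
  ultimately show ?thesis using assms by (intro exI[of _ u] exI[of _ v]) (auto simp: u_def v_def)
qed

lemma A_ivl: "Aset m = {1..<1+m}" by (auto simp: Aset_def)
lemma B_ivl: "Bset m = {m+1..<(m+1)+(m+1)}" by (auto simp: Bset_def)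

lemma Cls_Vt: "Cls m = Vt m"
proof
  show "Cls m \<subseteq> Vt m"
  proof
    fix x assume "x \<in> Cls m"
    then obtain y z where y: "y \<in> Xv m" and z: "z \<in> Xv m" and xe: "x = cls m y z" by (auto simp: Cls_def)
    have fin: "finite (YA m y)" "finite (YA m z)" "finite (YB m y)" "finite (YB m z)" using y z Xv_fin by blast+
    have cy: "card y = card (YA m y) + card (YB m y)" "card z = card (YA m z) + card (YB m z)"
      using card_split Xv_sub y z by blast+
    have c1: "card y = m \<or> card y = m+1" "card z = m \<or> card z = m+1" using y z by (auto simp: Xv_iff)
    have c2: "card (YA m y) \<le> m" "card (YA m z) \<le> m" using cardA_le y z by blast+
    have c3: "card (YA m y \<inter> YA m z) \<le> card (YA m y)" "card (YA m y \<inter> YA m z) \<le> card (YA m z)"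
      "card (YB m y \<inter> YB m z) \<le> card (YB m y)" "card (YB m y \<inter> YB m z) \<le> card (YB m z)"
      using fin by (auto intro: card_mono)
    have "card (YA m y \<union> YA m z) \<le> m" using card_mono[OF fin_A, of "YA m y \<union> YA m z"] by simp
    then have c4: "card (YA m y) + card (YA m z) \<le> m + card (YA m y \<inter> YA m z)"
      using card_Un_Int[OF fin(1,2)] by simp
    have "card (YB m y \<union> YB m z) \<le> m+1" using card_mono[OF fin_B, of "YB m y \<union> YB m z"] by simp
    then have c5: "card (YB m y) + card (YB m z) \<le> m + 1 + card (YB m y \<inter> YB m z)"
      using card_Un_Int[OF fin(3,4)] by simp
    show "x \<in> Vt m" unfolding xe cls_def IntA IntB Vt_def using cy c1 c2 c3 c4 c5 by auto
  qed
next
  show "Vt m \<subseteq> Cls m"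
  proof
    fix x assume x: "x \<in> Vt m"
    obtain p s q t r \<rho> where xe: "x = (p,s,q,t,r,\<rho>)" by (cases x) auto
    have h: "p+s = m \<or> p+s = m+1" "q+t = m \<or> q+t = m+1" "p \<le> m" "q \<le> m"
      "r \<le> p" "r \<le> q" "p+q \<le> m+r" "\<rho> \<le> s" "\<rho> \<le> t" "s+t \<le> m+1+\<rho>"
      using x xe by (auto simp: Vt_def)
    obtain u v where uv: "u \<subseteq> Aset m" "v \<subseteq> Aset m" "card u = p" "card v = q" "card (u \<inter> v) = r"
      using interval_sets[OF h(5,6), of m 1] h(7) unfolding A_ivl by (auto simp: add.commute)
    obtain u' v' where uv': "u' \<subseteq> Bset m" "v' \<subseteq> Bset m" "card u' = s" "card v' = t" "card (u' \<inter> v') = \<rho>"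
      using interval_sets[OF h(8,9), of "m+1" "m+1"] h(10) unfolding B_ivl by auto
    define y where "y = u \<union> u'"
    define z where "z = v \<union> v'"
    have fu: "finite u" "finite u'" "finite v" "finite v'"
      using uv uv' finite_subset fin_A fin_B by blast+
    have yA: "YA m y = u" and yB: "YB m y = u'" and zA: "YA m z = v" and zB: "YB m z = v'"
      unfolding y_def z_def using uv uv' AB_disj by blast+
    have yS: "y \<subseteq> Sset m" "z \<subseteq> Sset m" unfolding y_def z_def using uv uv' S_AB by blast+
    have "card y = p + s" using card_split[OF yS(1)] yA yB uv uv' by simp
    then have yX: "y \<in> Xv m" using yS h(1) by (auto simp: Xv_iff)
    have "card z = q + t" using card_split[OF yS(2)] zA zB uv uv' by simp
    then have zX: "z \<in> Xv m" using yS h(2) by (auto simp: Xv_iff)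
    have "cls m y z = x" unfolding cls_def IntA IntB yA yB zA zB xe using uv uv' by simp
    then show "x \<in> Cls m" using cls_in[OF yX zX] by simp
  qed
qed

theorem card_Cls: "card (Cls m) = 4 * ((m + 4) choose 4)"
  using Cls_Vt Vt_card Qm_binom by simp

theorem main: "vector_space.dim mscale (Talg m) = 4 * ((m + 4) choose 4)"
  using dim_Cls card_Cls by simp

theorem corollary4p9:
  fixes m :: nat
  assumes "m \<ge> 3"
  shows "vector_space.dim mscale (Talg m) = 4 * ((m + 4) choose 4)"
  using main by simp

end
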